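(* For each $j$ let $P_j(z,\zeta)$ be a Borel function on $\left(\bigcup_{m=1}^{j-1}K_m\right)\times K_j$, and let $P(z,\zeta)$ be a function on $\left(\bigcup_{m\ge1}K_m\right)\times K_0$. Assume that for each $m$ and each $z\in K_m$ the functions $P_j(z,\cdot)$, $j>m$, are uniformly bounded (in $j$ and $\zeta$) and the sequence $\{P_j(z,\cdot)\}_{j>m}$ has strong limit values $P(z,\cdot)$ with respect to $M$. Let $p>1$ and $\phi\in\mathcal A^p(M)$ with weak limit values $\phi_*$, and suppose $$\phi_m(z)\le\int_{K_j}P_j(z,\zeta)\phi_j(\zeta)\,d\mu_j(\zeta)$$ for all $j$, all $m<j$ and all $z\in K_m$. Then for every $m$ and every $z\in K_m$, $$\phi_m(z)\le\int_{K_0}P(z,\zeta)\phi_*(\zeta)\,d\mu(\zeta).$$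
   Context: $K$ is a compact metric space and $M=\{\mu_j\}_{j\ge1}$ is a sequence of finite positive regular Borel measures on $K$ converging weak-* in $C(K)^*$ (i.e. $\int h\,d\mu_j\to\int h\,d\mu$ for all $h\in C(K)$) to a finite positive Borel measure $\mu$; $K_j=\operatorname{supp}\mu_j$, $K_0=\operatorname{supp}\mu$. A "sequence" $\phi=\{\phi_j\}$ means a sequence of real Borel functions $\phi_j$ on $K_j$ (a sequence indexed by $j>m$ is treated the same way); $\|\phi\|_{L^p(M)}=\limsup_j\|\phi_j\|_{L^p(K_j,\mu_j)}$. $\phi$ has weak limit values $\phi_*$ if $\phi_*$ is $\mu$-integrable on $K_0$ and $\int_{K_j}h\phi_j\,d\mu_j\to\int_{K_0}h\phi_*\,d\mu$ for all $h\in C(K)$; $\mathcal A^p(M)$ is the set of sequences with weak limit values and $\|\phi\|_{L^p(M)}<\infty$. A sequence $\phi$ has strong limit values $\phi^*$ (a real $\mu$-measurable function on $K_0$) if for all real $a<b$ and all $\varepsilon,\delta>0$ there are $j_0$ and an open set $O\subset K$ containing $\{x\in K_0:a\le\phi^*(x)<b\}$ such that $\mu_j(\{x\in K_j:\phi_j(x)<a-\varepsilon\}\cap O)+\mu_j(\{x\in K_j:\phi_j(x)>b+\varepsilon\}\cap O)<\delta$ for all $j\ge j_0$. *)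

theory Defs
  imports "HOL-Analysis.Analysis"
begin

definition msupp :: "'a::metric_space measure \<Rightarrow> 'a set" where
  "msupp N = {x. \<forall>e>0. emeasure N (ball x e) \<noteq> 0}"

definition lp_norm :: "real \<Rightarrow> 'a measure \<Rightarrow> 'a set \<Rightarrow> ('a \<Rightarrow> real) \<Rightarrow> ereal" where
  "lp_norm p N S f =
     (let I = (\<integral>\<^sup>+ x. ennreal (indicator S x * \<bar>f x\<bar> powr p) \<partial>N)
      in if I = \<infinity> then \<infinity> else ereal (enn2real I powr (1 / p)))"

definition lp_norm_seq :: "real \<Rightarrow> (nat \<Rightarrow> 'a::metric_space measure) \<Rightarrow> (nat \<Rightarrow> 'a \<Rightarrow> real) \<Rightarrow> ereal" where
  "lp_norm_seq p \<mu>s \<phi> = limsup (\<lambda>j. lp_norm p (\<mu>s j) (msupp (\<mu>s j)) (\<phi> j))"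

definition has_weak_limit_values ::
  "'a::metric_space set \<Rightarrow> (nat \<Rightarrow> 'a measure) \<Rightarrow> 'a measure \<Rightarrow> (nat \<Rightarrow> 'a \<Rightarrow> real) \<Rightarrow> ('a \<Rightarrow> real) \<Rightarrow> bool" where
  "has_weak_limit_values K \<mu>s \<mu> \<phi> \<phi>s \<longleftrightarrow>
     integrable (completion \<mu>) (\<lambda>x. indicator (msupp \<mu>) x * \<phi>s x) \<and>
     (\<forall>h. continuous_on K h \<longrightarrow>
        (\<lambda>j. \<integral>x. indicator (msupp (\<mu>s j)) x * h x * \<phi> j x \<partial>(\<mu>s j))
          \<longlonglongrightarrow> (\<integral>x. indicator (msupp \<mu>) x * h x * \<phi>s x \<partial>(completion \<mu>)))"

definition in_Ap ::
  "real \<Rightarrow> 'a::metric_space set \<Rightarrow> (nat \<Rightarrow> 'a measure) \<Rightarrow> 'a measure \<Rightarrow> (nat \<Rightarrow> 'a \<Rightarrow> real) \<Rightarrow> bool" where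
  "in_Ap p K \<mu>s \<mu> \<phi> \<longleftrightarrow> (\<exists>\<phi>s. has_weak_limit_values K \<mu>s \<mu> \<phi> \<phi>s) \<and> lp_norm_seq p \<mu>s \<phi> < \<infinity>"

definition has_strong_limit_values ::
  "'a::metric_space set \<Rightarrow> (nat \<Rightarrow> 'a measure) \<Rightarrow> 'a measure \<Rightarrow> nat \<Rightarrow> (nat \<Rightarrow> 'a \<Rightarrow> real) \<Rightarrow> ('a \<Rightarrow> real) \<Rightarrow> bool" where
  "has_strong_limit_values K \<mu>s \<mu> m0 \<psi> \<psi>s \<longleftrightarrow>
     \<psi>s \<in> borel_measurable (restrict_space (completion \<mu>) (msupp \<mu>)) \<and>
     (\<forall>a b \<epsilon> \<delta>. a < b \<and> \<epsilon> > 0 \<and> \<delta> > 0 \<longrightarrow>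
        (\<exists>j0 U. openin (top_of_set K) U \<and> {x \<in> msupp \<mu>. a \<le> \<psi>s x \<and> \<psi>s x < b} \<subseteq> U \<and>
           (\<forall>j\<ge>j0. j > m0 \<longrightarrow>
              measure (\<mu>s j) ({x \<in> msupp (\<mu>s j). \<psi> j x < a - \<epsilon>} \<inter> U)
            + measure (\<mu>s j) ({x \<in> msupp (\<mu>s j). \<psi> j x > b + \<epsilon>} \<inter> U) < \<delta>)))"

end

theory Submission
  imports Defs
begin


lemma msupp_closed:
  fixes N :: "'a::metric_space measure"
  assumes sN: "sets N = sets borel"
  shows "closed (msupp N)"
proof -
  have "open (- msupp N)"
    unfolding open_dist
  proof (intro ballI)
    fix x assume "x \<in> - msupp N"
    then obtain e where e: "e > 0" "emeasure N (ball x e) = 0" by (auto simp: msupp_def)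
    show "\<exists>e>0. \<forall>y. dist y x < e \<longrightarrow> y \<in> - msupp N"
    proof (intro exI[of _ e] conjI allI impI)
      fix y assume "dist y x < e"
      then have "ball y (e - dist y x) \<subseteq> ball x e"
      proof (intro subsetI)
        fix w assume "w \<in> ball y (e - dist y x)"
        then have "dist y w < e - dist y x" by simp
        then show "w \<in> ball x e" using dist_triangle[of x w y] dist_commute[of x y] by simp
      qed
      moreover have "ball x e \<in> sets N" using sN by simp
      ultimately have "emeasure N (ball y (e - dist y x)) \<le> emeasure N (ball x e)"
        by (rule emeasure_mono)
      then have "emeasure N (ball y (e - dist y x)) = 0"
        using e(2) by simp
      moreover have "e - dist y x > 0" using \<open>dist y x < e\<close> by simp
      ultimately have "\<exists>e>0. emeasure N (ball y e) = 0" by blast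
      then show "y \<in> - msupp N" by (simp add: msupp_def)
    qed (use e in auto)
  qed
  then show ?thesis by (simp add: closed_def)
qed

lemma msupp_sub:
  fixes N :: "'a::metric_space measure"
  assumes sN: "sets N = sets borel" and NK: "emeasure N (-K) = 0" and K: "compact K"
  shows "msupp N \<subseteq> K"
proof
  fix x assume x: "x \<in> msupp N"
  show "x \<in> K"
  proof (rule ccontr)
    assume "x \<notin> K"
    have "open (-K)" using compact_imp_closed[OF K] by (simp add: closed_def)
    then obtain e where e: "e > 0" "ball x e \<subseteq> -K" using \<open>x \<notin> K\<close> open_contains_ball by blast
    have "-K \<in> sets N" using sN compact_imp_closed[OF K] by simp
    then have "emeasure N (ball x e) \<le> emeasure N (-K)" using e by (intro emeasure_mono)
    then have "emeasure N (ball x e) = 0" using NK by simp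
    then show False using x e by (auto simp: msupp_def)
  qed
qed

lemma msupp_null:
  fixes N :: "'a::metric_space measure"
  assumes sN: "sets N = sets borel" and NK: "emeasure N (-K) = 0" and K: "compact K"
  shows "- msupp N \<in> null_sets N"
proof -
  have tb: "\<forall>e>0. \<exists>k. finite k \<and> K \<subseteq> (\<Union>x\<in>k. ball x e)"
    using K compact_eq_totally_bounded by blast
  have "\<forall>n::nat. \<exists>k. finite k \<and> K \<subseteq> (\<Union>x\<in>k. ball x (1 / Suc n))"
    using tb by simp
  then obtain S where S: "\<And>n. finite (S n)" "\<And>n. K \<subseteq> (\<Union>x\<in>S n. ball x (1 / Suc n))"
    by metis
  define B where "B n = (\<Union>y\<in>{y\<in>S n. emeasure N (ball y (1 / Suc n)) = 0}. ball y (1 / Suc n))" for n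
  have Bn: "B n \<in> null_sets N" for n
    unfolding B_def
    by (rule null_sets_UN') (use S(1) sN in \<open>auto intro: countable_finite\<close>)
  have "(\<Union>n. B n) \<in> null_sets N" using Bn by blast
  moreover have KN: "-K \<in> null_sets N" using NK sN compact_imp_closed[OF K] by (auto simp: null_sets_def)
  ultimately have U: "-K \<union> (\<Union>n. B n) \<in> null_sets N" by blast
  have sub: "- msupp N \<subseteq> -K \<union> (\<Union>n. B n)"
  proof
    fix x assume "x \<in> - msupp N"
    then obtain e where e: "e > 0" "emeasure N (ball x e) = 0" by (auto simp: msupp_def)
    show "x \<in> -K \<union> (\<Union>n. B n)"
    proof (cases "x \<in> K")
      case True
      obtain n :: nat where n: "inverse (real (Suc n)) < e / 2"
        using reals_Archimedean[of "e/2"] e(1) by auto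
      then have n': "1 / Suc n < e / 2" by (simp add: inverse_eq_divide)
      from S(2)[of n] True obtain y where y: "y \<in> S n" "x \<in> ball y (1 / Suc n)" by auto
      have "ball y (1 / Suc n) \<subseteq> ball x e"
      proof
        fix w assume "w \<in> ball y (1 / Suc n)"
        then have "dist y w < 1 / Suc n" by simp
        moreover have "dist x y < 1 / Suc n" using y(2) by (simp add: dist_commute)
        ultimately have "dist x w < e" using n' dist_triangle[of x w y] by linarith
        then show "w \<in> ball x e" by simp
      qed
      moreover have "ball x e \<in> sets N" using sN by simp
      ultimately have "emeasure N (ball y (1 / Suc n)) \<le> emeasure N (ball x e)"
        by (rule emeasure_mono)
      then have "emeasure N (ball y (1 / Suc n)) = 0"
        using e(2) by simp
      then have "x \<in> B n" using y unfolding B_def by auto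
      then show ?thesis by blast
    qed simp
  qed
  have "msupp N \<in> sets borel" using msupp_closed[OF sN] by (rule borel_closed)
  then have "msupp N \<in> sets N" using sN by simp
  then have "space N - msupp N \<in> sets N" by (rule sets.compl_sets)
  moreover have "space N = UNIV" using sets_eq_imp_space_eq[OF sN] by simp
  ultimately have "- msupp N \<in> sets N" by (simp add: Compl_eq_Diff_UNIV)
  then show ?thesis by (rule null_sets_subset[OF U _ sub])
qed

locale setting =
  fixes K :: "'a::metric_space set" and \<mu>s :: "nat \<Rightarrow> 'a measure" and \<mu> :: "'a measure"
  assumes K: "compact K"
    and meas_sets: "\<And>j. j \<ge> 1 \<Longrightarrow> sets (\<mu>s j) = sets borel"
    and meas_fin: "\<And>j. j \<ge> 1 \<Longrightarrow> finite_measure (\<mu>s j)"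
    and meas_on_K: "\<And>j. j \<ge> 1 \<Longrightarrow> emeasure (\<mu>s j) (- K) = 0"
    and lim_sets: "sets \<mu> = sets borel"
    and lim_fin: "finite_measure \<mu>"
    and lim_on_K: "emeasure \<mu> (- K) = 0"
    and weak_conv: "\<And>h :: 'a \<Rightarrow> real. continuous_on K h \<Longrightarrow>
        (\<lambda>j. \<integral>x. indicator K x * h x \<partial>(\<mu>s j)) \<longlonglongrightarrow> (\<integral>x. indicator K x * h x \<partial>\<mu>)"
begin

lemma Kclosed: "closed K" using K compact_imp_closed by blast

lemma bm_lim: "f \<in> borel_measurable borel \<Longrightarrow> f \<in> borel_measurable \<mu>"
  using measurable_cong_sets[OF lim_sets refl] by blast

lemma bm_j: "j \<ge> 1 \<Longrightarrow> f \<in> borel_measurable borel \<Longrightarrow> f \<in> borel_measurable (\<mu>s j)"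
  using measurable_cong_sets[OF meas_sets refl] by blast

lemma space_j: "j \<ge> 1 \<Longrightarrow> space (\<mu>s j) = UNIV"
  using sets_eq_imp_space_eq[OF meas_sets] by simp

lemma space_lim: "space \<mu> = UNIV"
  using sets_eq_imp_space_eq[OF lim_sets] by simp

lemma mass_conv: "(\<lambda>j. measure (\<mu>s j) K) \<longlonglongrightarrow> measure \<mu> K"
proof -
  have "(\<lambda>j. \<integral>x. indicator K x * (\<lambda>_. 1::real) x \<partial>(\<mu>s j)) \<longlonglongrightarrow> (\<integral>x. indicator K x * (\<lambda>_. 1) x \<partial>\<mu>)"
    by (rule weak_conv) simp
  then have "(\<lambda>j. measure (\<mu>s j) (K \<inter> space (\<mu>s j))) \<longlonglongrightarrow> measure \<mu> K"
    by (simp add: space_lim)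
  moreover have "\<forall>\<^sub>F j in sequentially. measure (\<mu>s j) (K \<inter> space (\<mu>s j)) = measure (\<mu>s j) K"
    using eventually_ge_at_top[of 1] by eventually_elim (simp add: space_j)
  ultimately show ?thesis using Lim_transform_eventually by fastforce
qed

lemma openin_borel:
  assumes "openin (top_of_set K) U" shows "U \<in> sets borel" "U \<subseteq> K" "closed (K - U)"
proof -
  obtain T where T: "open T" "U = K \<inter> T" using assms openin_open by blast
  show "U \<in> sets borel" using T Kclosed by auto
  show "U \<subseteq> K" using T by auto
  have "K - U = K \<inter> - T" using T by auto
  then show "closed (K - U)" using T Kclosed by (simp add: closed_Int open_closed)
qed

lemma port_open:
  assumes U: "openin (top_of_set K) U" and d: "\<delta> > 0"
  shows "\<forall>\<^sub>F j in sequentially. measure (\<mu>s j) U > measure \<mu> U - \<delta>"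
proof (cases "K - U = {}")
  case True
  then have "U = K" using openin_borel(2)[OF U] by auto
  then show ?thesis using mass_conv d by (auto intro: order_tendstoD(1))
next
  case False
  note Ub = openin_borel[OF U]
  interpret L: finite_measure \<mu> by (rule lim_fin)
  define h where "h n x = min 1 (real n * infdist x (K - U))" for n x
  have hc: "continuous_on UNIV (h n)" for n unfolding h_def by (intro continuous_intros)
  have hm: "h n \<in> borel_measurable borel" for n using hc borel_measurable_continuous_onI by blast
  have "(\<lambda>n. \<integral>x. indicator K x * h n x \<partial>\<mu>) \<longlonglongrightarrow> (\<integral>x. indicator U x \<partial>\<mu>)"
  proof (rule integral_dominated_convergence[where w="\<lambda>_. 1" and f="indicator U" and M=\<mu>
        and s="\<lambda>n x. indicator K x * h n x"])
    show "indicator U \<in> borel_measurable \<mu>" using Ub by (intro bm_lim) simp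
    show "(\<lambda>x. indicator K x * h n x) \<in> borel_measurable \<mu>" for n
      using hm Kclosed by (intro bm_lim borel_measurable_times) auto
    show "integrable \<mu> (\<lambda>_. 1::real)" by simp
    show "AE x in \<mu>. norm (indicator K x * h n x) \<le> 1" for n
      by (auto simp: h_def indicator_def infdist_nonneg)
    show "AE x in \<mu>. (\<lambda>n. indicator K x * h n x) \<longlonglongrightarrow> indicator U x"
    proof (intro AE_I2)
      fix x
      show "(\<lambda>n. indicator K x * h n x) \<longlonglongrightarrow> indicator U x"
      proof (cases "x \<in> U")
        case True
        then have "x \<notin> closure (K - U)" using Ub(3) by (simp add: closure_closed)
        then have "infdist x (K - U) \<noteq> 0"
          using in_closure_iff_infdist_zero[OF False] by blast
        then have pos: "infdist x (K - U) > 0"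
          using infdist_nonneg[of x "K - U"] by linarith
        obtain n0 :: nat where "real n0 > 1 / infdist x (K - U)" using reals_Archimedean2 by blast
        then have "\<forall>n\<ge>n0. indicator K x * h n x = indicator U x"
        proof (intro allI impI)
          fix n assume "n \<ge> n0" "real n0 > 1 / infdist x (K - U)"
          then have "real n > 1 / infdist x (K - U)" by linarith
          then have "real n * infdist x (K - U) > 1" using pos by (simp add: field_simps)
          then show "indicator K x * h n x = indicator U x"
            using True Ub(2) by (auto simp: h_def)
        qed
        then show ?thesis by (intro tendsto_eventually) (auto simp: eventually_sequentially)
      next
        case False
        then have "indicator K x * h n x = 0" for n
          by (cases "x \<in> K") (auto simp: h_def)
        then have "(\<lambda>n. indicator K x * h n x) = (\<lambda>n. 0::real)" by (intro ext) simp
        then show ?thesis using False by simp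
      qed
    qed
  qed
  then have lim: "(\<lambda>n. \<integral>x. indicator K x * h n x \<partial>\<mu>) \<longlonglongrightarrow> measure \<mu> U"
    by (simp add: space_lim)
  have "\<forall>\<^sub>F n in sequentially. (\<integral>x. indicator K x * h n x \<partial>\<mu>) > measure \<mu> U - \<delta>/2"
    using lim d by (auto intro: order_tendstoD(1))
  then obtain N0 where "\<forall>n\<ge>N0. (\<integral>x. indicator K x * h n x \<partial>\<mu>) > measure \<mu> U - \<delta>/2"
    by (auto simp: eventually_sequentially)
  then have n: "(\<integral>x. indicator K x * h N0 x \<partial>\<mu>) > measure \<mu> U - \<delta>/2" by simp
  define n where "n = N0"
  note n = n[folded n_def]
  have "continuous_on K (h n)" using hc continuous_on_subset by blast
  from weak_conv[OF this] d
  have ev: "\<forall>\<^sub>F j in sequentially. (\<integral>x. indicator K x * h n x \<partial>\<mu>s j) > (\<integral>x. indicator K x * h n x \<partial>\<mu>) - \<delta>/2"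
    by (auto intro: order_tendstoD(1))
  show ?thesis
    using ev eventually_ge_at_top[of 1]
  proof eventually_elim
    case (elim j)
    interpret J: finite_measure "\<mu>s j" using meas_fin elim(2) by simp
    have "(\<integral>x. indicator K x * h n x \<partial>\<mu>s j) \<le> (\<integral>x. indicator U x \<partial>\<mu>s j)"
    proof (rule integral_mono')
      have "U \<in> sets (\<mu>s j)" using Ub meas_sets[OF elim(2)] by simp
      then show "integrable (\<mu>s j) (indicator U :: 'a \<Rightarrow> real)"
        by (intro integrable_real_indicator) (auto simp: J.emeasure_eq_measure)
      fix x show "indicator K x * h n x \<le> indicator U x"
        by (cases "x \<in> U"; cases "x \<in> K") (auto simp: h_def infdist_zero)
      show "0 \<le> (indicator U x :: real)" by simp
    qed
    then have "(\<integral>x. indicator K x * h n x \<partial>\<mu>s j) \<le> measure (\<mu>s j) U"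
      using space_j[OF elim(2)] by simp
    then show ?case using elim(1) n by linarith
  qed
qed

lemma port_closed:
  assumes F: "closedin (top_of_set K) F" and d: "\<delta> > 0"
  shows "\<forall>\<^sub>F j in sequentially. measure (\<mu>s j) F < measure \<mu> F + \<delta>"
proof -
  have FK: "F \<subseteq> K" using closedin_imp_subset[OF F] by simp
  have U: "openin (top_of_set K) (K - F)" using openin_diff[OF openin_topspace F] by simp
  have "closed F" using closedin_closed_trans[OF F Kclosed] .
  then have Fb: "F \<in> sets borel" by (rule borel_closed)
  have ev1: "\<forall>\<^sub>F j in sequentially. measure (\<mu>s j) (K - F) > measure \<mu> (K - F) - \<delta>/2"
    using port_open[OF U] d by simp
  have ev2: "\<forall>\<^sub>F j in sequentially. measure (\<mu>s j) K < measure \<mu> K + \<delta>/2"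
    using mass_conv d by (auto intro: order_tendstoD(2))
  interpret L: finite_measure \<mu> by (rule lim_fin)
  have "measure \<mu> (K - F) = measure \<mu> K - measure \<mu> F"
    using FK Fb Kclosed lim_sets by (intro L.finite_measure_Diff) auto
  moreover
  show ?thesis using ev1 ev2 eventually_ge_at_top[of 1]
  proof eventually_elim
    case (elim j)
    interpret J: finite_measure "\<mu>s j" using meas_fin elim(3) by simp
    have "measure (\<mu>s j) (K - F) = measure (\<mu>s j) K - measure (\<mu>s j) F"
      using FK Fb Kclosed meas_sets[OF elim(3)] by (intro J.finite_measure_Diff) auto
    then show ?case using elim calculation by linarith
  qed
qed

end



context setting
begin

lemma supp_j:
  assumes "j \<ge> 1"
  shows "msupp (\<mu>s j) \<subseteq> K" "msupp (\<mu>s j) \<in> sets borel" "- msupp (\<mu>s j) \<in> null_sets (\<mu>s j)"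
    "measure (\<mu>s j) (- msupp (\<mu>s j)) = 0"
proof -
  show "msupp (\<mu>s j) \<subseteq> K" using msupp_sub[OF meas_sets[OF assms] meas_on_K[OF assms] K] .
  show "msupp (\<mu>s j) \<in> sets borel" using msupp_closed[OF meas_sets[OF assms]] by (rule borel_closed)
  show N: "- msupp (\<mu>s j) \<in> null_sets (\<mu>s j)" using msupp_null[OF meas_sets[OF assms] meas_on_K[OF assms] K] .
  show "measure (\<mu>s j) (- msupp (\<mu>s j)) = 0" using N by (rule measure_eq_0_null_sets)
qed

lemma supp_lim:
  shows "msupp \<mu> \<subseteq> K" "msupp \<mu> \<in> sets borel" "- msupp \<mu> \<in> null_sets \<mu>"
proof -
  show "msupp \<mu> \<subseteq> K" using msupp_sub[OF lim_sets lim_on_K K] .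
  show "msupp \<mu> \<in> sets borel" using msupp_closed[OF lim_sets] by (rule borel_closed)
  show N: "- msupp \<mu> \<in> null_sets \<mu>" using msupp_null[OF lim_sets lim_on_K K] .
qed

lemma small_open:
  assumes U: "openin (top_of_set K) U"
    and ev: "\<forall>\<^sub>F j in sequentially. X j \<in> sets borel \<and> msupp (\<mu>s j) \<inter> U \<subseteq> X j \<and> measure (\<mu>s j) (X j) \<le> \<delta>"
  shows "measure \<mu> U \<le> \<delta>"
proof (rule ccontr)
  assume "\<not> ?thesis"
  then have "measure \<mu> U - \<delta> > 0" by simp
  from port_open[OF U this] have ev2: "\<forall>\<^sub>F j in sequentially. measure (\<mu>s j) U > \<delta>" by simp
  have "\<forall>\<^sub>F j in sequentially. False"
    using ev ev2 eventually_ge_at_top[of 1]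
  proof eventually_elim
    case (elim j)
    interpret J: finite_measure "\<mu>s j" using meas_fin elim(3) .
    have sX: "X j \<in> sets (\<mu>s j)" using elim(1) meas_sets[OF elim(3)] by simp
    have sN: "- msupp (\<mu>s j) \<in> sets (\<mu>s j)" using supp_j(3)[OF elim(3)] by auto
    have "U \<subseteq> X j \<union> - msupp (\<mu>s j)" using elim(1) by blast
    then have "measure (\<mu>s j) U \<le> measure (\<mu>s j) (X j \<union> - msupp (\<mu>s j))"
      using sX sN by (intro J.finite_measure_mono) auto
    also have "\<dots> \<le> measure (\<mu>s j) (X j) + measure (\<mu>s j) (- msupp (\<mu>s j))"
      using sX sN by (rule measure_Un_le)
    finally show False using elim(1,2) supp_j(4)[OF elim(3)] by linarith
  qed
  then show False by simp
qed

lemma completion_finite: "finite_measure (completion \<mu>)"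
proof (rule finite_measureI)
  interpret L: finite_measure \<mu> by (rule lim_fin)
  show "emeasure (completion \<mu>) (space (completion \<mu>)) \<noteq> \<infinity>" by simp
qed

end

locale zfix = setting +
  fixes m :: nat and Pz :: "nat \<Rightarrow> 'a::metric_space \<Rightarrow> real" and Pl :: "'a \<Rightarrow> real" and C :: real
  assumes C: "C \<ge> 0"
    and Pbd: "\<And>j x. j > m \<Longrightarrow> x \<in> msupp (\<mu>s j) \<Longrightarrow> \<bar>Pz j x\<bar> \<le> C"
    and strong: "has_strong_limit_values K \<mu>s \<mu> m Pz Pl"
    and Pmeas: "\<And>j. j > m \<Longrightarrow> Pz j \<in> borel_measurable (restrict_space borel (msupp (\<mu>s j)))"
begin

lemma Pz_ind_meas:
  assumes "j > m"
  shows "(\<lambda>x. indicator (msupp (\<mu>s j)) x * Pz j x) \<in> borel_measurable borel"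
proof -
  have "msupp (\<mu>s j) \<inter> space borel \<in> sets borel" using supp_j(2)[of j] assms by simp
  from borel_measurable_restrict_space_iff[OF this, of "Pz j"] Pmeas[OF assms]
  show ?thesis by simp
qed

lemma Pz_sets:
  assumes "j > m"
  shows "{x \<in> msupp (\<mu>s j). Pz j x < c} \<in> sets borel" "{x \<in> msupp (\<mu>s j). Pz j x > c} \<in> sets borel"
proof -
  have [measurable]: "(\<lambda>x. indicator (msupp (\<mu>s j)) x * Pz j x) \<in> borel_measurable borel"
    using Pz_ind_meas[OF assms] .
  have [measurable]: "msupp (\<mu>s j) \<in> sets borel" using supp_j(2)[of j] assms by simp
  have "{x \<in> msupp (\<mu>s j). Pz j x < c} = {x \<in> space borel. indicator (msupp (\<mu>s j)) x * Pz j x < c} \<inter> msupp (\<mu>s j)"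
    by auto
  also have "\<dots> \<in> sets borel" by measurable
  finally show "{x \<in> msupp (\<mu>s j). Pz j x < c} \<in> sets borel" .
  have "{x \<in> msupp (\<mu>s j). Pz j x > c} = {x \<in> space borel. indicator (msupp (\<mu>s j)) x * Pz j x > c} \<inter> msupp (\<mu>s j)"
    by auto
  also have "\<dots> \<in> sets borel" by measurable
  finally show "{x \<in> msupp (\<mu>s j). Pz j x > c} \<in> sets borel" .
qed

lemma Pl_meas: "Pl \<in> borel_measurable (restrict_space (completion \<mu>) (msupp \<mu>))"
  using strong unfolding has_strong_limit_values_def by blast

lemma Pl_ind_meas: "(\<lambda>x. indicator (msupp \<mu>) x * Pl x) \<in> borel_measurable (completion \<mu>)"
proof -
  have "msupp \<mu> \<inter> space (completion \<mu>) \<in> sets (completion \<mu>)"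
    using supp_lim(2) lim_sets by simp
  from borel_measurable_restrict_space_iff[OF this, of Pl] Pl_meas
  show ?thesis by simp
qed

lemma Pl_sets: "{x \<in> msupp \<mu>. P (Pl x)} \<in> sets (completion \<mu>)" if "\<And>t. P t \<longleftrightarrow> t \<in> A" "A \<in> sets borel"
  for P A
proof -
  have [measurable]: "(\<lambda>x. indicator (msupp \<mu>) x * Pl x) \<in> borel_measurable (completion \<mu>)"
    by (rule Pl_ind_meas)
  have [measurable]: "msupp \<mu> \<in> sets (completion \<mu>)" using supp_lim(2) lim_sets by simp
  have [measurable]: "A \<in> sets borel" by fact
  have "{x \<in> msupp \<mu>. P (Pl x)} = {x \<in> space (completion \<mu>). indicator (msupp \<mu>) x * Pl x \<in> A} \<inter> msupp \<mu>"
    using that(1) space_lim by auto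
  also have "\<dots> \<in> sets (completion \<mu>)" by measurable
  finally show ?thesis .
qed

lemma strongD:
  assumes "a < b" "\<epsilon> > 0" "\<delta> > 0"
  shows "\<exists>j0 U. openin (top_of_set K) U \<and> {x \<in> msupp \<mu>. a \<le> Pl x \<and> Pl x < b} \<subseteq> U \<and>
           (\<forall>j\<ge>j0. j > m \<longrightarrow>
              measure (\<mu>s j) ({x \<in> msupp (\<mu>s j). Pz j x < a - \<epsilon>} \<inter> U)
            + measure (\<mu>s j) ({x \<in> msupp (\<mu>s j). Pz j x > b + \<epsilon>} \<inter> U) < \<delta>)"
proof -
  have "\<forall>a b \<epsilon> \<delta>. a < b \<and> \<epsilon> > 0 \<and> \<delta> > 0 \<longrightarrow>
        (\<exists>j0 U. openin (top_of_set K) U \<and> {x \<in> msupp \<mu>. a \<le> Pl x \<and> Pl x < b} \<subseteq> U \<and>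
           (\<forall>j\<ge>j0. j > m \<longrightarrow>
              measure (\<mu>s j) ({x \<in> msupp (\<mu>s j). Pz j x < a - \<epsilon>} \<inter> U)
            + measure (\<mu>s j) ({x \<in> msupp (\<mu>s j). Pz j x > b + \<epsilon>} \<inter> U) < \<delta>))"
    using strong unfolding has_strong_limit_values_def by (elim conjE)
  then show ?thesis using assms by blast
qed

lemma null_interval:
  assumes hyp: "\<And>j x. j > m \<Longrightarrow> x \<in> msupp (\<mu>s j) \<Longrightarrow> Pz j x < a - 1/2 \<or> Pz j x > b + 1/2"
  shows "{x \<in> msupp \<mu>. a \<le> Pl x \<and> Pl x < b} \<in> null_sets (completion \<mu>)"
proof -
  define E where "E = {x \<in> msupp \<mu>. a \<le> Pl x \<and> Pl x < b}"
  interpret LC: finite_measure "completion \<mu>" by (rule completion_finite)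
  have Em: "E \<in> sets (completion \<mu>)"
    unfolding E_def by (rule Pl_sets[where A="{a..<b}"]) auto
  have bnd: "measure (completion \<mu>) E \<le> \<delta>" if d: "\<delta> > 0" for \<delta>
  proof (cases "a < b")
    case False
    then have "E = {}" unfolding E_def by auto
    then show ?thesis using d by simp
  next
    case True
    obtain j0 U where U: "openin (top_of_set K) U" "E \<subseteq> U"
      and j0: "\<And>j. j \<ge> j0 \<Longrightarrow> j > m \<Longrightarrow>
        measure (\<mu>s j) ({x \<in> msupp (\<mu>s j). Pz j x < a - 1/2} \<inter> U)
      + measure (\<mu>s j) ({x \<in> msupp (\<mu>s j). Pz j x > b + 1/2} \<inter> U) < \<delta>"
      using strongD[OF True _ d, of "1/2"] unfolding E_def by auto
    note Ub = openin_borel[OF U(1)]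
    have "measure \<mu> U \<le> \<delta>"
    proof (rule small_open[OF U(1), where X="\<lambda>j. ({x \<in> msupp (\<mu>s j). Pz j x < a - 1/2} \<inter> U) \<union>
            ({x \<in> msupp (\<mu>s j). Pz j x > b + 1/2} \<inter> U)"])
      show "\<forall>\<^sub>F j in sequentially. ({x \<in> msupp (\<mu>s j). Pz j x < a - 1/2} \<inter> U) \<union>
            ({x \<in> msupp (\<mu>s j). Pz j x > b + 1/2} \<inter> U) \<in> sets borel \<and>
          msupp (\<mu>s j) \<inter> U \<subseteq> ({x \<in> msupp (\<mu>s j). Pz j x < a - 1/2} \<inter> U) \<union>
            ({x \<in> msupp (\<mu>s j). Pz j x > b + 1/2} \<inter> U) \<and>
          measure (\<mu>s j) (({x \<in> msupp (\<mu>s j). Pz j x < a - 1/2} \<inter> U) \<union>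
            ({x \<in> msupp (\<mu>s j). Pz j x > b + 1/2} \<inter> U)) \<le> \<delta>"
        using eventually_ge_at_top[of "j0 + m + 1"]
      proof eventually_elim
        case (elim j)
        then have jm: "j > m" "j \<ge> j0" "j \<ge> 1" by auto
        have s1: "{x \<in> msupp (\<mu>s j). Pz j x < a - 1/2} \<inter> U \<in> sets borel"
          using Pz_sets(1)[OF jm(1)] Ub(1) by blast
        have s2: "{x \<in> msupp (\<mu>s j). Pz j x > b + 1/2} \<inter> U \<in> sets borel"
          using Pz_sets(2)[OF jm(1)] Ub(1) by blast
        have "measure (\<mu>s j) (({x \<in> msupp (\<mu>s j). Pz j x < a - 1/2} \<inter> U) \<union>
            ({x \<in> msupp (\<mu>s j). Pz j x > b + 1/2} \<inter> U)) \<le>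
            measure (\<mu>s j) ({x \<in> msupp (\<mu>s j). Pz j x < a - 1/2} \<inter> U)
          + measure (\<mu>s j) ({x \<in> msupp (\<mu>s j). Pz j x > b + 1/2} \<inter> U)"
          using s1 s2 meas_sets[OF jm(3)] by (intro measure_Un_le) auto
        also have "\<dots> < \<delta>" using j0[OF jm(2) jm(1)] .
        finally show ?case using s1 s2 hyp[OF jm(1)] by auto
      qed
    qed
    have "measure (completion \<mu>) E \<le> measure (completion \<mu>) U"
      using U(2) Ub(1) lim_sets by (intro LC.finite_measure_mono) auto
    also have "\<dots> = measure \<mu> U" using Ub(1) lim_sets by simp
    finally show ?thesis using \<open>measure \<mu> U \<le> \<delta>\<close> by linarith
  qed
  have "measure (completion \<mu>) E \<le> 0"
    by (rule field_le_epsilon) (use bnd in simp)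
  then have "measure (completion \<mu>) E = 0" by (simp add: measure_nonneg antisym)
  then have "emeasure (completion \<mu>) E = 0" by (simp add: LC.emeasure_eq_measure)
  then show ?thesis using Em unfolding E_def by (auto simp: null_sets_def)
qed

lemma Pl_bdd: "{x \<in> msupp \<mu>. \<not> \<bar>Pl x\<bar> \<le> C + 1} \<in> null_sets (completion \<mu>)"
proof -
  define Ep where "Ep n = {x \<in> msupp \<mu>. C + 1 \<le> Pl x \<and> Pl x < real n}" for n :: nat
  define Em where "Em n = {x \<in> msupp \<mu>. - real n \<le> Pl x \<and> Pl x < - C - 1}" for n :: nat
  have "Ep n \<in> null_sets (completion \<mu>)" for n
    unfolding Ep_def
  proof (rule null_interval)
    fix j x assume "j > m" "x \<in> msupp (\<mu>s j)"
    from Pbd[OF this] show "Pz j x < C + 1 - 1/2 \<or> Pz j x > real n + 1/2" by auto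
  qed
  moreover have "Em n \<in> null_sets (completion \<mu>)" for n
    unfolding Em_def
  proof (rule null_interval)
    fix j x assume "j > m" "x \<in> msupp (\<mu>s j)"
    from Pbd[OF this] show "Pz j x < - real n - 1/2 \<or> Pz j x > - C - 1 + 1/2" by auto
  qed
  ultimately have "(\<Union>n. Ep n) \<union> (\<Union>n. Em n) \<in> null_sets (completion \<mu>)" by blast
  moreover have "{x \<in> msupp \<mu>. \<not> \<bar>Pl x\<bar> \<le> C + 1} \<subseteq> (\<Union>n. Ep n) \<union> (\<Union>n. Em n)"
  proof
    fix x assume x: "x \<in> {x \<in> msupp \<mu>. \<not> \<bar>Pl x\<bar> \<le> C + 1}"
    obtain n :: nat where n: "\<bar>Pl x\<bar> < real n" using reals_Archimedean2 by blast
    show "x \<in> (\<Union>n. Ep n) \<union> (\<Union>n. Em n)"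
    proof (cases "Pl x > 0")
      case True
      then have "x \<in> Ep n" using x n unfolding Ep_def by auto
      then show ?thesis by blast
    next
      case False
      then have "x \<in> Em n" using x n unfolding Em_def by auto
      then show ?thesis by blast
    qed
  qed
  ultimately show ?thesis using completion.complete2 by blast
qed

end



context zfix
begin

lemma convex_comb:
  fixes \<rho> :: "nat \<Rightarrow> 'b \<Rightarrow> real" and v :: "nat \<Rightarrow> real"
  assumes Spos: "(\<Sum>i<N. \<rho> i x) > 0" and nn: "\<And>i. \<rho> i x \<ge> 0" and e: "e \<ge> 0"
    and close: "\<And>i. i < N \<Longrightarrow> \<rho> i x > 0 \<Longrightarrow> \<bar>v i - y\<bar> \<le> e"
  shows "\<bar>(\<Sum>i<N. v i * \<rho> i x) / (\<Sum>i<N. \<rho> i x) - y\<bar> \<le> e"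
proof -
  define s where "s = (\<Sum>i<N. \<rho> i x)"
  have "(\<Sum>i<N. v i * \<rho> i x) / s - y = ((\<Sum>i<N. v i * \<rho> i x) - y * s) / s"
    using Spos by (simp add: s_def field_simps)
  also have "(\<Sum>i<N. v i * \<rho> i x) - y * s = (\<Sum>i<N. (v i - y) * \<rho> i x)"
    by (simp add: s_def sum_distrib_left sum_subtractf algebra_simps)
  finally have eq: "(\<Sum>i<N. v i * \<rho> i x) / s - y = (\<Sum>i<N. (v i - y) * \<rho> i x) / s" .
  have "\<bar>\<Sum>i<N. (v i - y) * \<rho> i x\<bar> \<le> (\<Sum>i<N. \<bar>(v i - y) * \<rho> i x\<bar>)" by (rule sum_abs)
  also have "\<dots> \<le> (\<Sum>i<N. e * \<rho> i x)"
  proof (rule sum_mono)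
    fix i assume i: "i \<in> {..<N}"
    show "\<bar>(v i - y) * \<rho> i x\<bar> \<le> e * \<rho> i x"
    proof (cases "\<rho> i x > 0")
      case True
      then show ?thesis using close[of i] i nn[of i] by (simp add: abs_mult mult_right_mono)
    next
      case False
      then have "\<rho> i x = 0" using nn[of i] by linarith
      then show ?thesis by simp
    qed
  qed
  also have "\<dots> = e * s" by (simp add: s_def sum_distrib_left)
  finally have A: "\<bar>\<Sum>i<N. (v i - y) * \<rho> i x\<bar> \<le> e * s" .
  have sp: "s > 0" using Spos by (simp add: s_def)
  have "\<bar>(\<Sum>i<N. v i * \<rho> i x) / s - y\<bar> = \<bar>\<Sum>i<N. (v i - y) * \<rho> i x\<bar> / s"
    using sp by (simp add: eq abs_divide)
  also have "\<dots> \<le> e" using A sp by (simp add: divide_le_eq mult.commute)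
  finally show ?thesis by (simp add: s_def)
qed

lemma approx:
  assumes \<eta>: "0 < \<eta>" "\<eta> \<le> 1" and \<tau>: "\<tau> > 0"
  shows "\<exists>g. continuous_on K g \<and> g \<in> borel_measurable borel \<and> (\<forall>x. \<bar>g x\<bar> \<le> C + 3)
     \<and> (\<forall>\<^sub>F j in sequentially. measure (\<mu>s j) {x \<in> msupp (\<mu>s j). \<bar>Pz j x - g x\<bar> > 2*\<eta>} \<le> \<tau>)
     \<and> measure (completion \<mu>) {x \<in> msupp \<mu>. \<bar>Pl x - g x\<bar> > 3*\<eta>} \<le> \<tau>"
proof -
  interpret L: finite_measure \<mu> by (rule lim_fin)
  interpret LC: finite_measure "completion \<mu>" by (rule completion_finite)
  define b where "b = - C - 1"
  define y where "y = (2*C+2)/\<eta>"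
  have y0: "y \<ge> 0" using C \<eta> by (simp add: y_def)
  define N where "N = nat \<lceil>y\<rceil> + 1"
  have N1: "N \<ge> 1" by (simp add: N_def)
  have cy: "real (nat \<lceil>y\<rceil>) \<ge> y" "real (nat \<lceil>y\<rceil>) < y + 1" using y0 by linarith+
  have RN: "real N = real (nat \<lceil>y\<rceil>) + 1" by (simp add: N_def)
  have yeta: "y * \<eta> = 2*C+2" using \<eta> by (simp add: y_def)
  have Nlow: "real N * \<eta> > 2*C + 2"
  proof -
    have "real N \<ge> y + 1" using RN cy by linarith
    then have "real N * \<eta> \<ge> (y + 1) * \<eta>" using \<eta> by (intro mult_right_mono) auto
    then show ?thesis using yeta \<eta> by (simp add: algebra_simps)
  qed
  have Nup: "real N * \<eta> \<le> 2*C + 4"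
  proof -
    have "real N \<le> y + 2" using RN cy by linarith
    then have "real N * \<eta> \<le> (y + 2) * \<eta>" using \<eta> by (intro mult_right_mono) auto
    then show ?thesis using yeta \<eta> by (simp add: algebra_simps)
  qed
  define v where "v i = b + (real i + 1) * \<eta>" for i :: nat
  have vbd: "\<bar>v i\<bar> \<le> C + 3" if "i < N" for i
  proof -
    have "(real i + 1) * \<eta> \<le> real N * \<eta>" using that \<eta> by (intro mult_right_mono) auto
    moreover have "(real i + 1) * \<eta> \<ge> 0" using \<eta> by simp
    ultimately show ?thesis using Nup C unfolding v_def b_def by linarith
  qed
  define \<delta>s where "\<delta>s = \<tau> / (2 * real N * real N + real N + 3)"
  have "0 \<le> 2 * real N * real N" by simp
  then have den: "2 * real N * real N + real N + 3 > 0" by linarith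
  have \<delta>s: "\<delta>s > 0" using \<tau> den by (simp add: \<delta>s_def)
  have \<delta>s_eq: "\<delta>s * (2 * real N * real N + real N + 3) = \<tau>" using den by (simp add: \<delta>s_def)
  define Pr where "Pr i j0 U \<longleftrightarrow> openin (top_of_set K) U \<and> {x \<in> msupp \<mu>. v i - \<eta> \<le> Pl x \<and> Pl x < v i} \<subseteq> U \<and>
           (\<forall>j\<ge>j0. j > m \<longrightarrow>
              measure (\<mu>s j) ({x \<in> msupp (\<mu>s j). Pz j x < v i - \<eta> - \<eta>/4} \<inter> U)
            + measure (\<mu>s j) ({x \<in> msupp (\<mu>s j). Pz j x > v i + \<eta>/4} \<inter> U) < \<delta>s)" for i j0 U
  have ex: "\<exists>j0 U. Pr i j0 U" for i
    unfolding Pr_def using strongD[of "v i - \<eta>" "v i" "\<eta>/4" \<delta>s] \<eta> \<delta>s by simp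
  define j0 where "j0 i = (SOME j. \<exists>U. Pr i j U)" for i
  define U where "U i = (SOME U. Pr i (j0 i) U)" for i
  have PrU: "Pr i (j0 i) (U i)" for i
  proof -
    have "\<exists>U. Pr i (j0 i) U" unfolding j0_def by (rule someI_ex) (rule ex)
    then show ?thesis unfolding U_def by (rule someI_ex)
  qed
  have j0U: "\<And>i. openin (top_of_set K) (U i)"
      "\<And>i. {x \<in> msupp \<mu>. v i - \<eta> \<le> Pl x \<and> Pl x < v i} \<subseteq> U i"
      "\<And>i j. j \<ge> j0 i \<Longrightarrow> j > m \<Longrightarrow>
              measure (\<mu>s j) ({x \<in> msupp (\<mu>s j). Pz j x < v i - \<eta> - \<eta>/4} \<inter> U i)
            + measure (\<mu>s j) ({x \<in> msupp (\<mu>s j). Pz j x > v i + \<eta>/4} \<inter> U i) < \<delta>s"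
    using PrU unfolding Pr_def by blast+
  have Ub: "U i \<in> sets borel" "U i \<subseteq> K" "closed (K - U i)" for i using openin_borel[OF j0U(1)] by auto
  define bad where "bad i j = ({x \<in> msupp (\<mu>s j). Pz j x < v i - \<eta> - \<eta>/4} \<inter> U i)
      \<union> ({x \<in> msupp (\<mu>s j). Pz j x > v i + \<eta>/4} \<inter> U i)" for i j
  have bad_sets: "bad i j \<in> sets borel" if "j > m" for i j
    unfolding bad_def using Pz_sets[OF that] Ub(1)[of i] by blast
  have bad_meas: "measure (\<mu>s j) (bad i j) < \<delta>s" if "j > m" "j \<ge> j0 i" for i j
  proof -
    have j1: "j \<ge> 1" using that by simp
    have "measure (\<mu>s j) (bad i j) \<le> measure (\<mu>s j) ({x \<in> msupp (\<mu>s j). Pz j x < v i - \<eta> - \<eta>/4} \<inter> U i)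
            + measure (\<mu>s j) ({x \<in> msupp (\<mu>s j). Pz j x > v i + \<eta>/4} \<inter> U i)"
      unfolding bad_def using Pz_sets[OF that(1)] Ub(1)[of i] meas_sets[OF j1]
      by (intro measure_Un_le) auto
    also have "\<dots> < \<delta>s" using j0U(3)[OF that(2,1)] .
    finally show ?thesis .
  qed
  have notbad: "v i - \<eta> - \<eta>/4 \<le> Pz j x \<and> Pz j x \<le> v i + \<eta>/4"
    if "x \<in> msupp (\<mu>s j)" "x \<in> U i" "x \<notin> bad i j" for i j x
    using that unfolding bad_def by auto
  define T where "T = \<Union>(U ` {..<N})"
  have Topen: "openin (top_of_set K) T" unfolding T_def using j0U(1) by blast
  note Tb = openin_borel[OF Topen]
  have coverU: "\<exists>k<N. x \<in> U k \<and> v k - \<eta> \<le> Pl x \<and> Pl x < v k"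
    if x: "x \<in> msupp \<mu>" "\<bar>Pl x\<bar> \<le> C + 1" for x
  proof -
    define q where "q = (Pl x - b) / \<eta>"
    have q0: "q \<ge> 0" using x \<eta> by (simp add: q_def b_def)
    define k where "k = nat \<lfloor>q\<rfloor>"
    have kq: "real k \<le> q" "q < real k + 1" using q0 unfolding k_def by linarith+
    have "q * \<eta> = Pl x - b" using \<eta> by (simp add: q_def)
    have "real k * \<eta> \<le> q * \<eta>" using kq \<eta> by (intro mult_right_mono) auto
    moreover have "q * \<eta> < (real k + 1) * \<eta>" using kq \<eta> by (intro mult_strict_right_mono) auto
    ultimately have k1: "v k - \<eta> \<le> Pl x" "Pl x < v k"
      using \<open>q * \<eta> = Pl x - b\<close> unfolding v_def by (simp_all add: algebra_simps)
    have "q * \<eta> \<le> 2*C+2" using \<open>q * \<eta> = Pl x - b\<close> x by (simp add: b_def)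
    then have "real k * \<eta> < real N * \<eta>" using \<open>real k * \<eta> \<le> q * \<eta>\<close> Nlow by linarith
    then have "k < N" using \<eta> by simp
    moreover have "x \<in> U k" using j0U(2)[of k] x k1 by auto
    ultimately show ?thesis using k1 by blast
  qed
  define Nt where "Nt = {x \<in> msupp \<mu>. \<not> \<bar>Pl x\<bar> \<le> C + 1}"
  have Nt: "Nt \<in> null_sets (completion \<mu>)" unfolding Nt_def by (rule Pl_bdd)
  have KT0: "measure \<mu> (K - T) = 0"
  proof -
    have "K - T \<subseteq> - msupp \<mu> \<union> Nt"
    proof
      fix x assume x: "x \<in> K - T"
      show "x \<in> - msupp \<mu> \<union> Nt"
      proof (rule ccontr)
        assume "\<not> ?thesis"
        then have "x \<in> msupp \<mu>" "\<bar>Pl x\<bar> \<le> C + 1" unfolding Nt_def by auto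
        from coverU[OF this] obtain k where "k < N" "x \<in> U k" by blast
        then show False using x unfolding T_def by blast
      qed
    qed
    moreover have "- msupp \<mu> \<union> Nt \<in> null_sets (completion \<mu>)"
      using null_sets_completionI[OF supp_lim(3)] Nt by blast
    ultimately have "K - T \<in> null_sets (completion \<mu>)" using completion.complete2 by blast
    moreover have "K - T \<in> sets \<mu>" using Tb(3) lim_sets by simp
    ultimately have "K - T \<in> null_sets \<mu>" using null_sets_completion_iff by blast
    then show ?thesis by (rule measure_eq_0_null_sets)
  qed
  obtain r where r: "r > 0" "K - T \<noteq> {} \<Longrightarrow> measure \<mu> {x \<in> K. infdist x (K - T) \<le> r} < \<delta>s"
  proof (cases "K - T = {}")
    case True
    then show ?thesis using that[of 1] by simp
  next
    case False
    define Fn where "Fn n = {x \<in> K. infdist x (K - T) \<le> 1 / Suc n}" for n :: nat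
    have Fn_closed: "closed (Fn n)" for n
    proof -
      have "closed {x. infdist x (K - T) \<le> 1 / Suc n}"
        by (rule closed_Collect_le) (auto intro: continuous_intros)
      then have "closed (K \<inter> {x. infdist x (K - T) \<le> 1 / Suc n})" using Kclosed by (rule closed_Int[rotated])
      moreover have "Fn n = K \<inter> {x. infdist x (K - T) \<le> 1 / Suc n}" by (auto simp: Fn_def)
      ultimately show ?thesis by simp
    qed
    have rng: "range Fn \<subseteq> sets \<mu>" using Fn_closed lim_sets by auto
    have dec: "decseq Fn"
    proof (rule decseq_SucI)
      fix n
      have "1 / real (Suc (Suc n)) \<le> 1 / real (Suc n)" by (intro divide_left_mono) auto
      then show "Fn (Suc n) \<subseteq> Fn n" by (auto simp: Fn_def)
    qed
    have inter: "(\<Inter>n. Fn n) = K - T"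
    proof
      show "(\<Inter>n. Fn n) \<subseteq> K - T"
      proof
        fix x assume x: "x \<in> (\<Inter>n. Fn n)"
        then have xK: "x \<in> K" by (auto simp: Fn_def)
        have le: "infdist x (K - T) \<le> 1 / Suc n" for n using x by (auto simp: Fn_def)
        have "infdist x (K - T) \<le> 0"
        proof (rule ccontr)
          assume "\<not> ?thesis"
          then have pos: "infdist x (K - T) > 0" by simp
          obtain n where "inverse (real (Suc n)) < infdist x (K - T)" using reals_Archimedean[OF pos] by blast
          then show False using le[of n] by (simp add: inverse_eq_divide)
        qed
        then have "infdist x (K - T) = 0" using infdist_nonneg[of x "K - T"] by linarith
        then have "x \<in> closure (K - T)" using in_closure_iff_infdist_zero[OF False] by blast
        then show "x \<in> K - T" using Tb(3) by (simp add: closure_closed)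
      qed
      show "K - T \<subseteq> (\<Inter>n. Fn n)" by (auto simp: Fn_def)
    qed
    have "(\<lambda>n. measure \<mu> (Fn n)) \<longlonglongrightarrow> measure \<mu> (K - T)"
      using L.finite_Lim_measure_decseq[OF rng dec] inter by simp
    then have "(\<lambda>n. measure \<mu> (Fn n)) \<longlonglongrightarrow> 0" using KT0 by simp
    then have "\<forall>\<^sub>F n in sequentially. measure \<mu> (Fn n) < \<delta>s" using \<delta>s by (auto intro: order_tendstoD(2))
    then obtain n0 where "\<forall>n\<ge>n0. measure \<mu> (Fn n) < \<delta>s" by (auto simp: eventually_sequentially)
    then have "measure \<mu> (Fn n0) < \<delta>s" by simp
    then show ?thesis using that[of "1 / Suc n0"] by (simp add: Fn_def)
  qed
  define F where "F = (if K - T = {} then {} else {x \<in> K. infdist x (K - T) \<le> r})"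
  have F_closed: "closed F"
  proof (cases "K - T = {}")
    case False
    have "closed {x. infdist x (K - T) \<le> r}"
      by (rule closed_Collect_le) (auto intro: continuous_intros)
    then have "closed (K \<inter> {x. infdist x (K - T) \<le> r})" using Kclosed by (rule closed_Int[rotated])
    moreover have "F = K \<inter> {x. infdist x (K - T) \<le> r}" using False by (auto simp: F_def)
    ultimately show ?thesis by simp
  qed (simp add: F_def)
  have FK: "F \<subseteq> K" by (auto simp: F_def)
  have F_closedin: "closedin (top_of_set K) F" using closed_subset[OF FK F_closed] .
  have Fb: "F \<in> sets borel" using F_closed by (rule borel_closed)
  have F_meas: "measure \<mu> F < \<delta>s" using r(2) \<delta>s by (auto simp: F_def)
  define w where "w = (if K - T = {} then (\<lambda>x. 0) else (\<lambda>x. max 0 (r - infdist x (K - T))))"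
  have w_cont: "continuous_on A w" for A
    by (cases "K - T = {}") (auto simp: w_def intro!: continuous_intros)
  have w_nn: "w x \<ge> 0" for x by (auto simp: w_def)
  have w_zero: "w x = 0" if "x \<in> K" "x \<notin> F" for x
    using that by (cases "K - T = {}") (auto simp: w_def F_def)
  have w_pos: "w x > 0" if "x \<in> K" "x \<notin> T" for x
  proof -
    have ne: "K - T \<noteq> {}" using that by blast
    have "infdist x (K - T) = 0" using that by simp
    then show ?thesis using ne r(1) by (simp add: w_def)
  qed
  define \<rho> where "\<rho> i = (if K - U i = {} then (\<lambda>x. 1) else (\<lambda>x. infdist x (K - U i)))" for i
  have \<rho>_cont: "continuous_on A (\<rho> i)" for A i
    by (cases "K - U i = {}") (auto simp: \<rho>_def intro!: continuous_intros)
  have \<rho>_nn: "\<rho> i x \<ge> 0" for i x by (auto simp: \<rho>_def infdist_nonneg)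
  have \<rho>_pos: "\<rho> i x > 0 \<longleftrightarrow> x \<in> U i" if "x \<in> K" for i x
  proof (cases "K - U i = {}")
    case True
    then show ?thesis using that by (auto simp: \<rho>_def)
  next
    case False
    show ?thesis
    proof
      assume "\<rho> i x > 0"
      then have "infdist x (K - U i) \<noteq> 0" using False by (simp add: \<rho>_def)
      then show "x \<in> U i" using that infdist_zero[of x "K - U i"] by blast
    next
      assume "x \<in> U i"
      then have "x \<notin> closure (K - U i)" using Ub(3)[of i] by (simp add: closure_closed)
      then have "infdist x (K - U i) \<noteq> 0" using in_closure_iff_infdist_zero[OF False] by blast
      then show "\<rho> i x > 0" using False infdist_nonneg[of x "K - U i"] by (simp add: \<rho>_def)
    qed
  qed
  define S where "S x = (\<Sum>i<N. \<rho> i x) + w x" for x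
  have S_nn: "S x \<ge> 0" for x unfolding S_def using \<rho>_nn w_nn by (simp add: sum_nonneg add_nonneg_nonneg)
  have S_pos: "S x > 0" if xK: "x \<in> K" for x
  proof (cases "x \<in> T")
    case True
    then obtain i where i: "i < N" "x \<in> U i" unfolding T_def by blast
    then have "\<rho> i x > 0" using \<rho>_pos[OF xK] by blast
    moreover have "\<rho> i x \<le> (\<Sum>i<N. \<rho> i x)" using i(1) \<rho>_nn by (intro member_le_sum) auto
    ultimately show ?thesis using w_nn[of x] by (simp add: S_def)
  next
    case False
    then have "w x > 0" using w_pos xK by blast
    moreover have "(\<Sum>i<N. \<rho> i x) \<ge> 0" using \<rho>_nn by (simp add: sum_nonneg)
    ultimately show ?thesis by (simp add: S_def)
  qed
  define g where "g x = (\<Sum>i<N. v i * \<rho> i x) / S x" for x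
  have num_cont: "continuous_on A (\<lambda>x. \<Sum>i<N. v i * \<rho> i x)" for A
    by (intro continuous_on_sum continuous_on_mult continuous_on_const \<rho>_cont)
  have S_cont: "continuous_on A S" for A
    unfolding S_def by (intro continuous_on_add continuous_on_sum \<rho>_cont w_cont)
  have g_cont: "continuous_on K g"
    unfolding g_def using S_pos by (intro continuous_on_divide num_cont S_cont) (auto simp: less_le)
  have g_meas: "g \<in> borel_measurable borel"
    unfolding g_def
    by (intro borel_measurable_divide borel_measurable_continuous_onI num_cont S_cont)
  have g_bd: "\<bar>g x\<bar> \<le> C + 3" for x
  proof (cases "S x = 0")
    case True
    then show ?thesis using C by (simp add: g_def)
  next
    case False
    then have Sp: "S x > 0" using S_nn[of x] by linarith
    have "\<bar>\<Sum>i<N. v i * \<rho> i x\<bar> \<le> (\<Sum>i<N. \<bar>v i * \<rho> i x\<bar>)" by (rule sum_abs)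
    also have "\<dots> \<le> (\<Sum>i<N. (C + 3) * \<rho> i x)"
    proof (rule sum_mono)
      fix i assume "i \<in> {..<N}"
      then have "\<bar>v i\<bar> \<le> C + 3" using vbd by simp
      then show "\<bar>v i * \<rho> i x\<bar> \<le> (C + 3) * \<rho> i x"
        using \<rho>_nn[of i x] by (simp add: abs_mult mult_right_mono)
    qed
    also have "\<dots> = (C + 3) * (\<Sum>i<N. \<rho> i x)" by (simp add: sum_distrib_left)
    also have "\<dots> \<le> (C + 3) * S x" using w_nn[of x] C by (intro mult_left_mono) (auto simp: S_def)
    finally have "\<bar>\<Sum>i<N. v i * \<rho> i x\<bar> \<le> (C + 3) * S x" .
    then have "\<bar>\<Sum>i<N. v i * \<rho> i x\<bar> / S x \<le> C + 3" using pos_divide_le_eq[OF Sp] by simp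
    moreover have "\<bar>g x\<bar> = \<bar>\<Sum>i<N. v i * \<rho> i x\<bar> / S x"
      unfolding g_def using Sp by (simp add: abs_divide)
    ultimately show ?thesis by simp
  qed
  have convex: "\<bar>g x - yy\<bar> \<le> e"
    if "x \<in> K" "w x = 0" "e \<ge> 0" "\<And>i. i < N \<Longrightarrow> x \<in> U i \<Longrightarrow> \<bar>v i - yy\<bar> \<le> e" for x yy e
  proof -
    have Sx: "S x = (\<Sum>i<N. \<rho> i x)" using that(2) by (simp add: S_def)
    have "(\<Sum>i<N. \<rho> i x) > 0" using S_pos[OF that(1)] Sx by simp
    from convex_comb[where N=N and \<rho>=\<rho> and x=x and e=e and v=v and y=yy, OF this \<rho>_nn that(3)]
    show ?thesis using that(4) \<rho>_pos[OF that(1)] by (simp add: g_def Sx)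
  qed
  have jside: "\<forall>\<^sub>F j in sequentially. measure (\<mu>s j) {x \<in> msupp (\<mu>s j). \<bar>Pz j x - g x\<bar> > 2*\<eta>} \<le> \<tau>"
    using port_closed[OF F_closedin \<delta>s] eventually_ge_at_top[of "(\<Sum>i<N. j0 i) + m + 1"]
  proof eventually_elim
    case (elim j)
    have jm: "j > m" "j \<ge> 1" using elim(2) by auto
    have jj0: "j \<ge> j0 i" if "i < N" for i
    proof -
      have "j0 i \<le> (\<Sum>i<N. j0 i)" using that by (intro member_le_sum) auto
      then show ?thesis using elim(2) by linarith
    qed
    interpret J: finite_measure "\<mu>s j" using meas_fin jm(2) .
    define B where "B = {x \<in> msupp (\<mu>s j). \<bar>Pz j x - g x\<bar> > 2*\<eta>}"
    have sub: "B \<subseteq> F \<union> (\<Union>i\<in>{..<N}. bad i j)"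
    proof
      fix x assume xB: "x \<in> B"
      show "x \<in> F \<union> (\<Union>i\<in>{..<N}. bad i j)"
      proof (rule ccontr)
        assume nx: "\<not> ?thesis"
        have xS: "x \<in> msupp (\<mu>s j)" using xB by (simp add: B_def)
        have xK: "x \<in> K" using supp_j(1)[OF jm(2)] xS by blast
        have "\<bar>g x - Pz j x\<bar> \<le> 2*\<eta>"
        proof (rule convex[OF xK])
          show "w x = 0" using w_zero xK nx by blast
          show "2*\<eta> \<ge> 0" using \<eta> by simp
          fix i assume i: "i < N" "x \<in> U i"
          then have "x \<notin> bad i j" using nx by blast
          from notbad[OF xS i(2) this] show "\<bar>v i - Pz j x\<bar> \<le> 2*\<eta>" using \<eta> by auto
        qed
        then show False using xB by (simp add: B_def abs_minus_commute)
      qed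
    qed
    have sets1: "(\<Union>i\<in>{..<N}. bad i j) \<in> sets (\<mu>s j)"
      using bad_sets[OF jm(1)] meas_sets[OF jm(2)] by auto
    have sets2: "F \<in> sets (\<mu>s j)" using Fb meas_sets[OF jm(2)] by simp
    have "measure (\<mu>s j) B \<le> measure (\<mu>s j) (F \<union> (\<Union>i\<in>{..<N}. bad i j))"
      using sub sets1 sets2 by (intro J.finite_measure_mono) auto
    also have "\<dots> \<le> measure (\<mu>s j) F + measure (\<mu>s j) (\<Union>i\<in>{..<N}. bad i j)"
      using sets2 sets1 by (rule measure_Un_le)
    also have "measure (\<mu>s j) (\<Union>i\<in>{..<N}. bad i j) \<le> (\<Sum>i<N. measure (\<mu>s j) (bad i j))"
      using bad_sets[OF jm(1)] meas_sets[OF jm(2)] by (intro measure_UNION_le) auto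
    also have "\<dots> \<le> of_nat (card {..<N}) * \<delta>s"
      using bad_meas[OF jm(1) jj0] by (intro sum_bounded_above) (auto intro: less_imp_le)
    finally have "measure (\<mu>s j) B \<le> measure (\<mu>s j) F + real N * \<delta>s" by simp
    also have "\<dots> \<le> (real N + 2) * \<delta>s" using elim(1) F_meas by (simp add: algebra_simps)
    also have "\<dots> \<le> \<tau>"
    proof -
      have "real N + 2 \<le> 2 * real N * real N + real N + 3" by simp
      then have "(real N + 2) * \<delta>s \<le> (2 * real N * real N + real N + 3) * \<delta>s"
        using \<delta>s by (intro mult_right_mono) auto
      then show ?thesis using \<delta>s_eq by (simp add: mult.commute)
    qed
    finally show ?case by (simp add: B_def)
  qed
  define far where "far i k \<longleftrightarrow> \<bar>v i - v k\<bar> > 2*\<eta>" for i k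
  have farU: "measure \<mu> (U i \<inter> U k) \<le> 2 * \<delta>s" if "far i k" for i k
  proof (rule small_open[where X="\<lambda>j. bad i j \<union> bad k j"])
    show "openin (top_of_set K) (U i \<inter> U k)" using j0U(1) by blast
    show "\<forall>\<^sub>F j in sequentially. bad i j \<union> bad k j \<in> sets borel \<and>
        msupp (\<mu>s j) \<inter> (U i \<inter> U k) \<subseteq> bad i j \<union> bad k j \<and>
        measure (\<mu>s j) (bad i j \<union> bad k j) \<le> 2 * \<delta>s"
      using eventually_ge_at_top[of "j0 i + j0 k + m + 1"]
    proof eventually_elim
      case (elim j)
      have jm: "j > m" "j \<ge> 1" "j \<ge> j0 i" "j \<ge> j0 k" using elim by auto
      have s: "bad i j \<in> sets borel" "bad k j \<in> sets borel" using bad_sets[OF jm(1)] by auto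
      have "measure (\<mu>s j) (bad i j \<union> bad k j) \<le> measure (\<mu>s j) (bad i j) + measure (\<mu>s j) (bad k j)"
        using s meas_sets[OF jm(2)] by (intro measure_Un_le) auto
      also have "\<dots> \<le> 2 * \<delta>s" using bad_meas[OF jm(1) jm(3)] bad_meas[OF jm(1) jm(4)] by simp
      finally have m2: "measure (\<mu>s j) (bad i j \<union> bad k j) \<le> 2 * \<delta>s" .
      have "msupp (\<mu>s j) \<inter> (U i \<inter> U k) \<subseteq> bad i j \<union> bad k j"
      proof
        fix x assume x: "x \<in> msupp (\<mu>s j) \<inter> (U i \<inter> U k)"
        show "x \<in> bad i j \<union> bad k j"
        proof (rule ccontr)
          assume "\<not> ?thesis"
          then have "x \<notin> bad i j" "x \<notin> bad k j" by auto
          with notbad[of x j i] notbad[of x j k] x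
          have "v i - \<eta> - \<eta>/4 \<le> Pz j x" "Pz j x \<le> v i + \<eta>/4"
               "v k - \<eta> - \<eta>/4 \<le> Pz j x" "Pz j x \<le> v k + \<eta>/4" by auto
          then have "\<bar>v i - v k\<bar> \<le> 2*\<eta>" using \<eta> by linarith
          then show False using that by (simp add: far_def)
        qed
      qed
      then show ?case using s m2 by blast
    qed
  qed
  define W where "W = (\<Union>p\<in>{..<N}\<times>{..<N}. if far (fst p) (snd p) then U (fst p) \<inter> U (snd p) else {})"
  have Wsets: "W \<in> sets borel" unfolding W_def using Ub(1) by auto
  have W_meas: "measure \<mu> W \<le> real N * real N * (2 * \<delta>s)"
  proof -
    have "measure \<mu> W \<le> (\<Sum>p\<in>{..<N}\<times>{..<N}. measure \<mu> (if far (fst p) (snd p) then U (fst p) \<inter> U (snd p) else {}))"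
      unfolding W_def using Ub(1) lim_sets by (intro measure_UNION_le) auto
    also have "\<dots> \<le> of_nat (card ({..<N}\<times>{..<N})) * (2 * \<delta>s)"
      using farU \<delta>s by (intro sum_bounded_above) auto
    finally show ?thesis by (simp add: card_cartesian_product)
  qed
  have muside: "measure (completion \<mu>) {x \<in> msupp \<mu>. \<bar>Pl x - g x\<bar> > 3*\<eta>} \<le> \<tau>"
  proof -
    define B0 where "B0 = {x \<in> msupp \<mu>. \<bar>Pl x - g x\<bar> > 3*\<eta>}"
    have sub: "B0 \<subseteq> Nt \<union> F \<union> W"
    proof
      fix x assume xB: "x \<in> B0"
      show "x \<in> Nt \<union> F \<union> W"
      proof (rule ccontr)
        assume nx: "\<not> ?thesis"
        have xS: "x \<in> msupp \<mu>" using xB by (simp add: B0_def)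
        have xK: "x \<in> K" using supp_lim(1) xS by blast
        have bd: "\<bar>Pl x\<bar> \<le> C + 1" using nx xS by (auto simp: Nt_def)
        from coverU[OF xS bd] obtain k where k: "k < N" "x \<in> U k" "v k - \<eta> \<le> Pl x" "Pl x < v k" by blast
        have "\<bar>g x - Pl x\<bar> \<le> 3*\<eta>"
        proof (rule convex[OF xK])
          show "w x = 0" using w_zero xK nx by blast
          show "3*\<eta> \<ge> 0" using \<eta> by simp
          fix i assume i: "i < N" "x \<in> U i"
          have "\<not> far i k"
          proof
            assume "far i k"
            then have "x \<in> W" unfolding W_def using i k by (intro UN_I[of "(i, k)"]) auto
            then show False using nx by blast
          qed
          then have "\<bar>v i - v k\<bar> \<le> 2*\<eta>" by (simp add: far_def)
          then show "\<bar>v i - Pl x\<bar> \<le> 3*\<eta>" using k by linarith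
        qed
        then show False using xB by (simp add: B0_def abs_minus_commute)
      qed
    qed
    have sNt: "Nt \<in> sets (completion \<mu>)" using Nt by auto
    have sF: "F \<in> sets (completion \<mu>)" using Fb lim_sets by simp
    have sW: "W \<in> sets (completion \<mu>)" using Wsets lim_sets by simp
    have "measure (completion \<mu>) B0 \<le> measure (completion \<mu>) (Nt \<union> F \<union> W)"
      using sub sNt sF sW by (intro LC.finite_measure_mono) auto
    also have "\<dots> \<le> measure (completion \<mu>) (Nt \<union> F) + measure (completion \<mu>) W"
      using sNt sF sW by (intro measure_Un_le) auto
    also have "measure (completion \<mu>) (Nt \<union> F) \<le> measure (completion \<mu>) Nt + measure (completion \<mu>) F"
      using sNt sF by (intro measure_Un_le) auto
    also have "measure (completion \<mu>) Nt = 0" using Nt by (rule measure_eq_0_null_sets)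
    also have "measure (completion \<mu>) F = measure \<mu> F" using Fb lim_sets by simp
    also have "measure (completion \<mu>) W = measure \<mu> W" using Wsets lim_sets by simp
    finally have "measure (completion \<mu>) B0 \<le> measure \<mu> F + measure \<mu> W" by simp
    also have "\<dots> \<le> \<delta>s + real N * real N * (2 * \<delta>s)" using F_meas W_meas by simp
    also have "\<dots> \<le> \<tau>"
    proof -
      have "\<delta>s + real N * real N * (2 * \<delta>s) \<le> (2 * real N * real N + real N + 3) * \<delta>s"
        using \<delta>s by (simp add: algebra_simps)
      then show ?thesis using \<delta>s_eq by (simp add: mult.commute)
    qed
    finally show ?thesis by (simp add: B0_def)
  qed
  show ?thesis using g_cont g_meas g_bd jside muside by blast
qed

end



lemma young_like:
  fixes y t p :: real
  assumes t: "t > 0" and p: "p > 1"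
  shows "\<bar>y\<bar> \<le> t + t powr (1 - p) * \<bar>y\<bar> powr p"
proof (cases "\<bar>y\<bar> \<le> t")
  case True
  have "t powr (1 - p) * \<bar>y\<bar> powr p \<ge> 0" by simp
  then show ?thesis using True by linarith
next
  case False
  then have yt: "\<bar>y\<bar> > t" by simp
  have "\<bar>y\<bar> powr p = \<bar>y\<bar> * \<bar>y\<bar> powr (p - 1)"
    using yt t by (simp add: powr_mult_base)
  moreover have "\<bar>y\<bar> powr (p - 1) \<ge> t powr (p - 1)"
    using yt t p by (intro powr_mono2) auto
  ultimately have "\<bar>y\<bar> powr p \<ge> \<bar>y\<bar> * t powr (p - 1)"
    using yt t by (simp add: mult_left_mono)
  then have "t powr (1 - p) * \<bar>y\<bar> powr p \<ge> t powr (1 - p) * (\<bar>y\<bar> * t powr (p - 1))"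
    by (intro mult_left_mono) auto
  also have "t powr (1 - p) * (\<bar>y\<bar> * t powr (p - 1)) = \<bar>y\<bar> * (t powr (1 - p) * t powr (p - 1))"
    by (simp add: algebra_simps)
  also have "t powr (1 - p) * t powr (p - 1) = 1"
    using t by (simp add: powr_add[symmetric])
  finally show ?thesis using t by simp
qed

lemma est_j:
  fixes M :: "'a measure" and f d :: "'a \<Rightarrow> real"
  assumes fin: "finite_measure M" and fm: "f \<in> borel_measurable M" and dm: "d \<in> borel_measurable M"
    and B: "B \<in> sets M" and \<alpha>: "\<alpha> \<ge> 0" and \<beta>: "\<beta> \<ge> 0"
    and dbd: "\<And>x. \<bar>d x\<bar> \<le> \<alpha> + \<beta> * indicator B x"
    and ip: "integrable M (\<lambda>x. \<bar>f x\<bar> powr p)" and Q: "(\<integral>x. \<bar>f x\<bar> powr p \<partial>M) \<le> Q"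
    and t: "t > 0" and p: "p > 1"
  shows "integrable M (\<lambda>x. d x * f x)"
    "\<bar>\<integral>x. d x * f x \<partial>M\<bar> \<le> \<alpha> * (measure M (space M) + Q) + \<beta> * (t * measure M B + t powr (1 - p) * Q)"
    "integrable M f"
proof -
  interpret finite_measure M by (rule fin)
  define G where "G x = \<alpha> * (1 + \<bar>f x\<bar> powr p) + \<beta> * (t * indicator B x + t powr (1 - p) * \<bar>f x\<bar> powr p)" for x
  have iB: "integrable M (indicator B :: 'a \<Rightarrow> real)" using B by (intro integrable_real_indicator) (auto simp: emeasure_eq_measure)
  have i1: "integrable M (\<lambda>x. 1 + \<bar>f x\<bar> powr p)" by (rule Bochner_Integration.integrable_add[OF integrable_const ip])
  have i2: "integrable M (\<lambda>x. t * indicator B x + t powr (1 - p) * \<bar>f x\<bar> powr p)"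
    by (rule Bochner_Integration.integrable_add[OF integrable_mult_right[OF iB] integrable_mult_right[OF ip]])
  have iG: "integrable M G" unfolding G_def
    by (rule Bochner_Integration.integrable_add[OF integrable_mult_right[OF i1] integrable_mult_right[OF i2]])
  have ptw: "\<bar>d x * f x\<bar> \<le> G x" for x
  proof -
    have "\<bar>d x * f x\<bar> = \<bar>d x\<bar> * \<bar>f x\<bar>" by (simp add: abs_mult)
    also have "\<dots> \<le> (\<alpha> + \<beta> * indicator B x) * \<bar>f x\<bar>" using dbd by (intro mult_right_mono) auto
    also have "\<dots> = \<alpha> * \<bar>f x\<bar> + \<beta> * (indicator B x * \<bar>f x\<bar>)" by (simp add: algebra_simps)
    also have "\<alpha> * \<bar>f x\<bar> \<le> \<alpha> * (1 + \<bar>f x\<bar> powr p)"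
      using young_like[of 1 p "f x"] p \<alpha> by (intro mult_left_mono) auto
    also have "indicator B x * \<bar>f x\<bar> \<le> t * indicator B x + t powr (1 - p) * \<bar>f x\<bar> powr p"
    proof (cases "x \<in> B")
      case True
      then show ?thesis using young_like[OF t p, of "f x"] by simp
    next
      case False
      then show ?thesis by simp
    qed
    then have "\<beta> * (indicator B x * \<bar>f x\<bar>) \<le> \<beta> * (t * indicator B x + t powr (1 - p) * \<bar>f x\<bar> powr p)"
      using \<beta> by (intro mult_left_mono) auto
    finally show ?thesis unfolding G_def by linarith
  qed
  show idf: "integrable M (\<lambda>x. d x * f x)"
  proof (rule Bochner_Integration.integrable_bound[OF iG])
    show "(\<lambda>x. d x * f x) \<in> borel_measurable M" using dm fm by auto
    have "\<bar>d x * f x\<bar> \<le> \<bar>G x\<bar>" for x using ptw[of x] by linarith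
    then show "AE x in M. norm (d x * f x) \<le> norm (G x)" by simp
  qed
  have "\<bar>\<integral>x. d x * f x \<partial>M\<bar> \<le> (\<integral>x. \<bar>d x * f x\<bar> \<partial>M)"
    using integral_norm_bound[of M "\<lambda>x. d x * f x"] by simp
  also have "\<dots> \<le> (\<integral>x. G x \<partial>M)"
    using idf iG ptw by (intro integral_mono) auto
  also have "(\<integral>x. G x \<partial>M) = \<alpha> * (measure M (space M) + (\<integral>x. \<bar>f x\<bar> powr p \<partial>M))
      + \<beta> * (t * measure M B + t powr (1 - p) * (\<integral>x. \<bar>f x\<bar> powr p \<partial>M))"
    unfolding G_def using ip iB sets.Int_space_eq2[OF B]
    by (simp add: integral_add integral_mult_right integrable_mult_right)
  also have "\<dots> \<le> \<alpha> * (measure M (space M) + Q) + \<beta> * (t * measure M B + t powr (1 - p) * Q)"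
    using Q \<alpha> \<beta> t by (intro add_mono mult_left_mono) auto
  finally show "\<bar>\<integral>x. d x * f x \<partial>M\<bar> \<le> \<alpha> * (measure M (space M) + Q) + \<beta> * (t * measure M B + t powr (1 - p) * Q)" .
  have le1: "\<bar>f x\<bar> \<le> 1 + \<bar>f x\<bar> powr p" for x using young_like[of 1 p "f x"] p by simp
  show "integrable M f"
  proof (rule Bochner_Integration.integrable_bound[OF i1 fm])
    have "\<bar>f x\<bar> \<le> \<bar>1 + \<bar>f x\<bar> powr p\<bar>" for x using le1[of x] by linarith
    then show "AE x in M. norm (f x) \<le> norm (1 + \<bar>f x\<bar> powr p)" by simp
  qed
qed

lemma est_lim:
  fixes M :: "'a measure" and f d :: "'a \<Rightarrow> real"
  assumes fi: "integrable M f" and dm: "d \<in> borel_measurable M"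
    and B: "B \<in> sets M" and \<alpha>: "\<alpha> \<ge> 0" and \<beta>: "\<beta> \<ge> 0"
    and dbd: "AE x in M. \<bar>d x\<bar> \<le> \<alpha> + \<beta> * indicator B x"
  shows "integrable M (\<lambda>x. d x * f x)"
    "\<bar>\<integral>x. d x * f x \<partial>M\<bar> \<le> \<alpha> * (\<integral>x. \<bar>f x\<bar> \<partial>M) + \<beta> * (\<integral>x. indicator B x * \<bar>f x\<bar> \<partial>M)"
proof -
  define G where "G x = \<alpha> * \<bar>f x\<bar> + \<beta> * (indicator B x * \<bar>f x\<bar>)" for x
  have iB: "integrable M (\<lambda>x. indicator B x * \<bar>f x\<bar>)"
    using integrable_real_mult_indicator[OF B integrable_abs[OF fi]] by (simp add: mult.commute)
  have iG: "integrable M G" unfolding G_def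
    by (rule Bochner_Integration.integrable_add[OF integrable_mult_right[OF integrable_abs[OF fi]] integrable_mult_right[OF iB]])
  have ptw: "AE x in M. \<bar>d x * f x\<bar> \<le> G x"
    using dbd
  proof eventually_elim
    case (elim x)
    have "\<bar>d x * f x\<bar> = \<bar>d x\<bar> * \<bar>f x\<bar>" by (simp add: abs_mult)
    also have "\<dots> \<le> (\<alpha> + \<beta> * indicator B x) * \<bar>f x\<bar>" using elim by (intro mult_right_mono) auto
    also have "\<dots> = G x" by (simp add: G_def algebra_simps)
    finally show ?case .
  qed
  have fm: "f \<in> borel_measurable M" using fi by auto
  show idf: "integrable M (\<lambda>x. d x * f x)"
  proof (rule Bochner_Integration.integrable_bound[OF iG])
    show "(\<lambda>x. d x * f x) \<in> borel_measurable M" using dm fm by auto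
    show "AE x in M. norm (d x * f x) \<le> norm (G x)" using ptw by eventually_elim auto
  qed
  have "\<bar>\<integral>x. d x * f x \<partial>M\<bar> \<le> (\<integral>x. \<bar>d x * f x\<bar> \<partial>M)"
    using integral_norm_bound[of M "\<lambda>x. d x * f x"] by simp
  also have "\<dots> \<le> (\<integral>x. G x \<partial>M)"
    using idf iG ptw by (intro integral_mono_AE) auto
  also have "(\<integral>x. G x \<partial>M) = \<alpha> * (\<integral>x. \<bar>f x\<bar> \<partial>M) + \<beta> * (\<integral>x. indicator B x * \<bar>f x\<bar> \<partial>M)"
    unfolding G_def using fi iB by (simp add: integral_add integral_mult_right integrable_mult_right)
  finally show "\<bar>\<integral>x. d x * f x \<partial>M\<bar> \<le> \<alpha> * (\<integral>x. \<bar>f x\<bar> \<partial>M) + \<beta> * (\<integral>x. indicator B x * \<bar>f x\<bar> \<partial>M)" .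
qed

lemma abs_cont:
  fixes M :: "'a measure" and f :: "'a \<Rightarrow> real"
  assumes fin: "finite_measure M" and fi: "integrable M f" and e: "e > 0"
  shows "\<exists>\<delta>>0. \<forall>B\<in>sets M. measure M B < \<delta> \<longrightarrow> (\<integral>x. indicator B x * \<bar>f x\<bar> \<partial>M) \<le> e"
proof -
  interpret finite_measure M by (rule fin)
  have fm: "f \<in> borel_measurable M" using fi by auto
  define s where "s n x = \<bar>f x\<bar> * indicator {x \<in> space M. \<bar>f x\<bar> > real n} x" for n :: nat and x
  have sm: "{x \<in> space M. \<bar>f x\<bar> > real n} \<in> sets M" for n using fm by measurable
  have "(\<lambda>n. \<integral>x. s n x \<partial>M) \<longlonglongrightarrow> (\<integral>x. (\<lambda>_. 0::real) x \<partial>M)"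
  proof (rule integral_dominated_convergence[where w="\<lambda>x. \<bar>f x\<bar>"])
    show "(\<lambda>_. 0::real) \<in> borel_measurable M" by simp
    show "s n \<in> borel_measurable M" for n unfolding s_def using fm sm[of n] by measurable
    show "integrable M (\<lambda>x. \<bar>f x\<bar>)" using fi by auto
    show "AE x in M. norm (s n x) \<le> \<bar>f x\<bar>" for n by (auto simp: s_def indicator_def)
    show "AE x in M. (\<lambda>n. s n x) \<longlonglongrightarrow> 0"
    proof (intro AE_I2)
      fix x
      obtain n0 :: nat where "\<bar>f x\<bar> < real n0" using reals_Archimedean2 by blast
      then have "\<forall>n\<ge>n0. s n x = 0" by (auto simp: s_def indicator_def)
      then show "(\<lambda>n. s n x) \<longlonglongrightarrow> 0" by (intro tendsto_eventually) (auto simp: eventually_sequentially)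
    qed
  qed
  then have "(\<lambda>n. \<integral>x. s n x \<partial>M) \<longlonglongrightarrow> 0" by simp
  moreover have "0 < e / 2" using e by simp
  ultimately have "\<forall>\<^sub>F n in sequentially. (\<integral>x. s n x \<partial>M) < e / 2" by (rule order_tendstoD(2))
  then obtain n0 where "\<forall>n\<ge>n0. (\<integral>x. s n x \<partial>M) < e / 2" by (auto simp: eventually_sequentially)
  then have n0: "(\<integral>x. s n0 x \<partial>M) < e / 2" by simp
  define \<delta> where "\<delta> = e / 2 / (real n0 + 1)"
  have \<delta>: "\<delta> > 0" using e by (simp add: \<delta>_def)
  have isn: "integrable M (s n0)" unfolding s_def
    using integrable_real_mult_indicator[OF sm[of n0] integrable_abs[OF fi]] by (simp add: mult.commute)
  show ?thesis
  proof (intro exI[of _ \<delta>] conjI ballI impI \<delta>)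
    fix B assume B: "B \<in> sets M" "measure M B < \<delta>"
    have iB: "integrable M (indicator B :: 'a \<Rightarrow> real)" using B by (intro integrable_real_indicator) (auto simp: emeasure_eq_measure)
    have "(\<integral>x. indicator B x * \<bar>f x\<bar> \<partial>M) \<le> (\<integral>x. real n0 * indicator B x + s n0 x \<partial>M)"
    proof (rule integral_mono)
      show "integrable M (\<lambda>x. indicator B x * \<bar>f x\<bar>)"
        using integrable_real_mult_indicator[OF B(1) integrable_abs[OF fi]] by (simp add: mult.commute)
      show "integrable M (\<lambda>x. real n0 * indicator B x + s n0 x)" using iB isn by auto
      fix x assume x: "x \<in> space M"
      show "indicator B x * \<bar>f x\<bar> \<le> real n0 * indicator B x + s n0 x"
        using x by (cases "x \<in> B"; cases "\<bar>f x\<bar> > real n0") (auto simp: s_def indicator_def)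
    qed
    also have "\<dots> = real n0 * measure M B + (\<integral>x. s n0 x \<partial>M)"
      using iB isn B by (simp add: integral_add)
    also have "real n0 * measure M B \<le> real n0 * \<delta>" using B by (intro mult_left_mono) auto
    also have "real n0 * \<delta> \<le> e / 2"
    proof -
      have nz: "real n0 + 1 \<noteq> 0" by simp
      have "(real n0 + 1) * \<delta> = (real n0 + 1) * (e / 2) / (real n0 + 1)"
        unfolding \<delta>_def by (rule times_divide_eq_right)
      also have "\<dots> = e / 2" by (rule nonzero_mult_div_cancel_left[OF nz])
      finally have "(real n0 + 1) * \<delta> = e / 2" .
      moreover have "real n0 * \<delta> \<le> (real n0 + 1) * \<delta>" using \<delta> by simp
      ultimately show ?thesis by linarith
    qed
    finally show "(\<integral>x. indicator B x * \<bar>f x\<bar> \<partial>M) \<le> e" using n0 by linarith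
  qed
qed

lemma lp_bound:
  fixes N :: "'a measure" and f :: "'a \<Rightarrow> real"
  assumes lp: "lp_norm p N S f < ereal L" and p: "p > 1"
    and fm: "(\<lambda>x. indicator S x * f x) \<in> borel_measurable N"
  shows "integrable N (\<lambda>x. \<bar>indicator S x * f x\<bar> powr p)"
    "(\<integral>x. \<bar>indicator S x * f x\<bar> powr p \<partial>N) \<le> L powr p"
proof -
  define I where "I = (\<integral>\<^sup>+ x. ennreal (indicator S x * \<bar>f x\<bar> powr p) \<partial>N)"
  have eq: "indicator S x * \<bar>f x\<bar> powr p = \<bar>indicator S x * f x\<bar> powr p" for x
    by (cases "x \<in> S") auto
  have lp': "(if I = \<infinity> then \<infinity> else ereal (enn2real I powr (1 / p))) < ereal L"
    using lp unfolding lp_norm_def I_def Let_def .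
  then have Ifin: "I \<noteq> \<infinity>" by (cases "I = \<infinity>") auto
  with lp' have lt: "enn2real I powr (1 / p) < L" by simp
  have I_eq: "I = (\<integral>\<^sup>+ x. ennreal (\<bar>indicator S x * f x\<bar> powr p) \<partial>N)" unfolding I_def using eq by simp
  have pm: "(\<lambda>x. \<bar>indicator S x * f x\<bar> powr p) \<in> borel_measurable N" using fm by measurable
  have I_en: "I = ennreal (enn2real I)" using Ifin by (simp add: ennreal_enn2real_if)
  show int: "integrable N (\<lambda>x. \<bar>indicator S x * f x\<bar> powr p)"
    by (rule integrableI_nn_integral_finite[OF pm _ I_en[unfolded I_eq]]) auto
  have "(\<integral>x. \<bar>indicator S x * f x\<bar> powr p \<partial>N) = enn2real I"
    unfolding I_eq using pm by (intro integral_eq_nn_integral) auto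
  also have "enn2real I = (enn2real I powr (1 / p)) powr p"
  proof -
    have "(enn2real I powr (1 / p)) powr p = enn2real I powr (1 / p * p)" by (rule powr_powr)
    also have "1 / p * p = 1" using p by simp
    finally show ?thesis by (simp add: powr_one)
  qed
  also have "\<dots> \<le> L powr p"
    using lt p by (intro powr_mono2) auto
  finally show "(\<integral>x. \<bar>indicator S x * f x\<bar> powr p \<partial>N) \<le> L powr p" .
qed



lemma scale_helper:
  fixes c q e Q :: real assumes "c > 0" "q > 0"
  shows "c * (e / (8 * c * q) * Q) = e / 8 * (Q / q)" "c * (Q * (e / (8 * c * q))) = e / 8 * (Q / q)"
  using assms by (simp_all add: field_simps)

lemma scale_helper2: fixes c e :: real assumes "c > 0" shows "c * (e / (8 * c)) = e / 8"
  using assms by (simp add: field_simps)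

theorem theorem4p4:
  fixes K :: "'a::metric_space set"
    and \<mu>s :: "nat \<Rightarrow> 'a measure" and \<mu> :: "'a measure"
    and P :: "nat \<Rightarrow> 'a \<Rightarrow> 'a \<Rightarrow> real" and Plim :: "'a \<Rightarrow> 'a \<Rightarrow> real"
    and \<phi> :: "nat \<Rightarrow> 'a \<Rightarrow> real" and \<phi>s :: "'a \<Rightarrow> real" and p :: real
  assumes K: "compact K"
    and meas_sets: "\<And>j. j \<ge> 1 \<Longrightarrow> sets (\<mu>s j) = sets borel"
    and meas_fin: "\<And>j. j \<ge> 1 \<Longrightarrow> finite_measure (\<mu>s j)"
    and meas_on_K: "\<And>j. j \<ge> 1 \<Longrightarrow> emeasure (\<mu>s j) (- K) = 0"
    and lim_sets: "sets \<mu> = sets borel"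
    and lim_fin: "finite_measure \<mu>"
    and lim_on_K: "emeasure \<mu> (- K) = 0"
    and weak_conv: "\<And>h :: 'a \<Rightarrow> real. continuous_on K h \<Longrightarrow>
        (\<lambda>j. \<integral>x. indicator K x * h x \<partial>(\<mu>s j)) \<longlonglongrightarrow> (\<integral>x. indicator K x * h x \<partial>\<mu>)"
    and P_borel: "\<And>j. j \<ge> 1 \<Longrightarrow> (\<lambda>(z, \<zeta>). P j z \<zeta>) \<in>
        borel_measurable (restrict_space borel ((\<Union>m\<in>{1..<j}. msupp (\<mu>s m)) \<times> msupp (\<mu>s j)))"
    and P_bdd: "\<And>m z. m \<ge> 1 \<Longrightarrow> z \<in> msupp (\<mu>s m) \<Longrightarrow>
        \<exists>C. \<forall>j>m. \<forall>\<zeta>\<in>msupp (\<mu>s j). \<bar>P j z \<zeta>\<bar> \<le> C"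
    and P_strong: "\<And>m z. m \<ge> 1 \<Longrightarrow> z \<in> msupp (\<mu>s m) \<Longrightarrow>
        has_strong_limit_values K \<mu>s \<mu> m (\<lambda>j. P j z) (Plim z)"
    and p: "p > 1"
    and \<phi>_borel: "\<And>j. j \<ge> 1 \<Longrightarrow> \<phi> j \<in> borel_measurable (restrict_space borel (msupp (\<mu>s j)))"
    and \<phi>_Ap: "in_Ap p K \<mu>s \<mu> \<phi>"
    and \<phi>_weak: "has_weak_limit_values K \<mu>s \<mu> \<phi> \<phi>s"
    and sub: "\<And>j m z. 1 \<le> m \<Longrightarrow> m < j \<Longrightarrow> z \<in> msupp (\<mu>s m) \<Longrightarrow>
        \<phi> m z \<le> (\<integral>\<zeta>. indicator (msupp (\<mu>s j)) \<zeta> * P j z \<zeta> * \<phi> j \<zeta> \<partial>(\<mu>s j))"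
    and m: "m \<ge> 1" and z: "z \<in> msupp (\<mu>s m)"
  shows "\<phi> m z \<le> (\<integral>\<zeta>. indicator (msupp \<mu>) \<zeta> * Plim z \<zeta> * \<phi>s \<zeta> \<partial>(completion \<mu>))"
proof -
  interpret S: setting K \<mu>s \<mu>
    by (rule setting.intro[OF K meas_sets meas_fin meas_on_K lim_sets lim_fin lim_on_K weak_conv])
  obtain C0 where C0: "\<forall>j>m. \<forall>\<zeta>\<in>msupp (\<mu>s j). \<bar>P j z \<zeta>\<bar> \<le> C0" using P_bdd[OF m z] by blast
  define C where "C = max C0 0"
  have C: "C \<ge> 0" by (simp add: C_def)
  have Pbd: "\<bar>P j z x\<bar> \<le> C" if "j > m" "x \<in> msupp (\<mu>s j)" for j x
    using C0 that by (force simp: C_def)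
  have Pmeas: "P j z \<in> borel_measurable (restrict_space borel (msupp (\<mu>s j)))" if j: "j > m" for j
  proof -
    have j1: "j \<ge> 1" using j m by simp
    have zA: "z \<in> (\<Union>m'\<in>{1..<j}. msupp (\<mu>s m'))" using z m j by auto
    have pm: "(\<lambda>\<zeta>. (z, \<zeta>)) \<in> measurable (restrict_space borel (msupp (\<mu>s j)))
        (restrict_space borel ((\<Union>m'\<in>{1..<j}. msupp (\<mu>s m')) \<times> msupp (\<mu>s j)))"
    proof (rule measurable_restrict_space3)
      show "(\<lambda>\<zeta>. (z, \<zeta>)) \<in> borel \<rightarrow>\<^sub>M borel"
        by (intro borel_measurable_continuous_onI continuous_intros)
      show "(\<lambda>\<zeta>. (z, \<zeta>)) \<in> msupp (\<mu>s j) \<rightarrow> (\<Union>m'\<in>{1..<j}. msupp (\<mu>s m')) \<times> msupp (\<mu>s j)"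
        using zA by auto
    qed
    have "(\<lambda>\<zeta>. (\<lambda>(z, \<zeta>). P j z \<zeta>) (z, \<zeta>)) \<in> borel_measurable (restrict_space borel (msupp (\<mu>s j)))"
      by (rule measurable_compose[OF pm P_borel[OF j1]])
    then show ?thesis by simp
  qed
  have zax: "zfix_axioms K \<mu>s \<mu> m (\<lambda>j. P j z) (Plim z) C"
  proof (rule zfix_axioms.intro)
    show "C \<ge> 0" by (rule C)
    show "\<And>j x. j > m \<Longrightarrow> x \<in> msupp (\<mu>s j) \<Longrightarrow> \<bar>P j z x\<bar> \<le> C" by (rule Pbd)
    show "has_strong_limit_values K \<mu>s \<mu> m (\<lambda>j. P j z) (Plim z)" by (rule P_strong[OF m z])
    show "\<And>j. j > m \<Longrightarrow> P j z \<in> borel_measurable (restrict_space borel (msupp (\<mu>s j)))" by (rule Pmeas)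
  qed
  interpret Z: zfix K \<mu>s \<mu> m "\<lambda>j. P j z" "Plim z" C
    by (rule zfix.intro[OF S.setting_axioms zax])
  have \<phi>m: "(\<lambda>x. indicator (msupp (\<mu>s j)) x * \<phi> j x) \<in> borel_measurable borel" if j: "j \<ge> 1" for j
  proof -
    have "msupp (\<mu>s j) \<inter> space borel \<in> sets borel" using S.supp_j(2)[OF j] by simp
    from borel_measurable_restrict_space_iff[OF this, of "\<phi> j"] \<phi>_borel[OF j]
    show ?thesis by simp
  qed
  have "lp_norm_seq p \<mu>s \<phi> < \<infinity>" using \<phi>_Ap by (simp add: in_Ap_def)
  then obtain L0 where L0: "lp_norm_seq p \<mu>s \<phi> < ereal L0" using ereal_dense2 by blast
  define L where "L = max L0 1"
  have L: "lp_norm_seq p \<mu>s \<phi> < ereal L" using L0 by (rule less_le_trans) (simp add: L_def)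
  have evL: "\<forall>\<^sub>F j in sequentially. lp_norm p (\<mu>s j) (msupp (\<mu>s j)) (\<phi> j) < ereal L"
    using Limsup_lessD[OF L[unfolded lp_norm_seq_def]] .
  define Q where "Q = L powr p"
  have Q0: "Q \<ge> 0" by (simp add: Q_def)
  define M1 where "M1 = measure \<mu> K + 1"
  have M1: "M1 \<ge> 1" by (simp add: M1_def)
  have evM: "\<forall>\<^sub>F j in sequentially. measure (\<mu>s j) (space (\<mu>s j)) \<le> M1"
  proof -
    have "\<forall>\<^sub>F j in sequentially. measure (\<mu>s j) K < measure \<mu> K + 1"
      using S.mass_conv by (auto intro: order_tendstoD(2))
    then show ?thesis using eventually_ge_at_top[of 1]
    proof eventually_elim
      case (elim j)
      have sK: "K \<in> sets (\<mu>s j)" "- K \<in> sets (\<mu>s j)" using S.Kclosed S.meas_sets[OF elim(2)] by auto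
      have "measure (\<mu>s j) (space (\<mu>s j)) = measure (\<mu>s j) (K \<union> - K)" using S.space_j[OF elim(2)] by simp
      also have "\<dots> \<le> measure (\<mu>s j) K + measure (\<mu>s j) (- K)" using sK by (rule measure_Un_le)
      also have "measure (\<mu>s j) (- K) = 0" using meas_on_K[OF elim(2)] by (simp add: measure_def)
      finally show ?case using elim(1) by (simp add: M1_def)
    qed
  qed
  define f0 where "f0 x = indicator (msupp \<mu>) x * \<phi>s x" for x
  have f0i: "integrable (completion \<mu>) f0" using \<phi>_weak unfolding has_weak_limit_values_def f0_def by blast
  have wk: "(\<lambda>j. \<integral>x. indicator (msupp (\<mu>s j)) x * h x * \<phi> j x \<partial>(\<mu>s j))
          \<longlonglongrightarrow> (\<integral>x. indicator (msupp \<mu>) x * h x * \<phi>s x \<partial>(completion \<mu>))"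
    if "continuous_on K h" for h
    using \<phi>_weak that unfolding has_weak_limit_values_def by blast
  define F0 where "F0 = (\<integral>x. \<bar>f0 x\<bar> \<partial>completion \<mu>)"
  have F0: "F0 \<ge> 0" by (simp add: F0_def)
  define W where "W = (\<integral>\<zeta>. indicator (msupp \<mu>) \<zeta> * Plim z \<zeta> * \<phi>s \<zeta> \<partial>(completion \<mu>))"
  have f0m: "f0 \<in> borel_measurable (completion \<mu>)" using f0i by auto
  have "\<phi> m z \<le> W"
  proof (rule field_le_epsilon)
    fix \<epsilon> :: real assume \<epsilon>: "0 < \<epsilon>"
    define \<eta> where "\<eta> = min 1 (\<epsilon> / (8 * (M1 + Q + F0 + 1)))"
    have den: "M1 + Q + F0 + 1 > 0" using M1 Q0 F0 by linarith
    have \<eta>: "0 < \<eta>" "\<eta> \<le> 1" using \<epsilon> den by (auto simp: \<eta>_def)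
    have \<eta>b: "\<eta> * (M1 + Q + F0 + 1) \<le> \<epsilon> / 8"
    proof -
      have "\<eta> \<le> \<epsilon> / (8 * (M1 + Q + F0 + 1))" by (simp add: \<eta>_def)
      then have "\<eta> * (M1 + Q + F0 + 1) \<le> \<epsilon> / (8 * (M1 + Q + F0 + 1)) * (M1 + Q + F0 + 1)"
        using den by (intro mult_right_mono) auto
      also have "\<dots> = \<epsilon> * (M1 + Q + F0 + 1) / (8 * (M1 + Q + F0 + 1))" by (rule times_divide_eq_left)
      also have "\<dots> = \<epsilon> / 8" using den by (intro nonzero_mult_divide_mult_cancel_right) auto
      finally show ?thesis .
    qed
    define a where "a = \<epsilon> / (8 * (2*C+3) * (Q+1))"
    have a: "a > 0" using \<epsilon> C Q0 by (simp add: a_def)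
    define t where "t = a powr (1 / (1 - p))"
    have t: "t > 0" using a by (simp add: t_def)
    have tp: "t powr (1 - p) = a"
    proof -
      have "t powr (1 - p) = a powr (1 / (1 - p) * (1 - p))" unfolding t_def by (rule powr_powr)
      also have "1 / (1 - p) * (1 - p) = 1" using p by simp
      finally show ?thesis using a by simp
    qed
    have tQ: "(2*C+3) * (t powr (1 - p) * Q) \<le> \<epsilon> / 8"
    proof -
      have "(2*C+3) * (t powr (1 - p) * Q) = \<epsilon> / 8 * (Q / (Q + 1))"
        unfolding tp a_def using C Q0 by (intro scale_helper(1)) auto
      also have "\<dots> \<le> \<epsilon> / 8 * 1" using \<epsilon> Q0 by (intro mult_left_mono) auto
      finally show ?thesis by simp
    qed
    obtain \<delta>0 where \<delta>0: "\<delta>0 > 0" "\<forall>B\<in>sets (completion \<mu>). measure (completion \<mu>) B < \<delta>0 \<longrightarrow>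
        (\<integral>x. indicator B x * \<bar>f0 x\<bar> \<partial>completion \<mu>) \<le> \<epsilon> / (8 * (2*C+4))"
      using abs_cont[OF S.completion_finite f0i, of "\<epsilon> / (8 * (2*C+4))"] \<epsilon> C by auto
    define \<tau> where "\<tau> = min (\<delta>0 / 2) (\<epsilon> / (8 * (2*C+3) * (t+1)))"
    have \<tau>: "\<tau> > 0" "\<tau> < \<delta>0" using \<delta>0 \<epsilon> C t by (auto simp: \<tau>_def)
    have \<tau>b: "(2*C+3) * (t * \<tau>) \<le> \<epsilon> / 8"
    proof -
      have "\<tau> \<le> \<epsilon> / (8 * (2*C+3) * (t+1))" by (simp add: \<tau>_def)
      then have "(2*C+3) * (t * \<tau>) \<le> (2*C+3) * (t * (\<epsilon> / (8 * (2*C+3) * (t+1))))"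
        using C t by (intro mult_left_mono) auto
      also have "\<dots> = \<epsilon> / 8 * (t / (t + 1))"
        using C t by (intro scale_helper(2)) auto
      also have "\<dots> \<le> \<epsilon> / 8 * 1" using \<epsilon> t by (intro mult_left_mono) auto
      finally show ?thesis by simp
    qed
    obtain g where g: "continuous_on K g" "g \<in> borel_measurable borel" "\<forall>x. \<bar>g x\<bar> \<le> C + 3"
      "\<forall>\<^sub>F j in sequentially. measure (\<mu>s j) {x \<in> msupp (\<mu>s j). \<bar>P j z x - g x\<bar> > 2*\<eta>} \<le> \<tau>"
      "measure (completion \<mu>) {x \<in> msupp \<mu>. \<bar>Plim z x - g x\<bar> > 3*\<eta>} \<le> \<tau>"
      using Z.approx[OF \<eta> \<tau>(1)] by blast
    define d0 where "d0 x = indicator (msupp \<mu>) x * Plim z x - indicator (msupp \<mu>) x * g x" for x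
    define B0 where "B0 = {x \<in> msupp \<mu>. \<bar>Plim z x - g x\<bar> > 3*\<eta>}"
    have gmc: "g \<in> borel_measurable (completion \<mu>)"
      using S.bm_lim[OF g(2)] by (rule measurable_completion)
    have s0c: "msupp \<mu> \<in> sets (completion \<mu>)" using S.supp_lim(2) lim_sets by simp
    have B0s: "B0 \<in> sets (completion \<mu>)"
    proof -
      have [measurable]: "(\<lambda>x. indicator (msupp \<mu>) x * Plim z x) \<in> borel_measurable (completion \<mu>)"
        by (rule Z.Pl_ind_meas)
      have [measurable]: "g \<in> borel_measurable (completion \<mu>)" by (rule gmc)
      have [measurable]: "msupp \<mu> \<in> sets (completion \<mu>)" by (rule s0c)
      have "B0 = {x \<in> space (completion \<mu>). \<bar>indicator (msupp \<mu>) x * Plim z x - g x\<bar> > 3*\<eta>} \<inter> msupp \<mu>"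
        using S.space_lim by (auto simp: B0_def)
      also have "\<dots> \<in> sets (completion \<mu>)" by measurable
      finally show ?thesis .
    qed
    have d0m: "d0 \<in> borel_measurable (completion \<mu>)"
    proof -
      have [measurable]: "(\<lambda>x. indicator (msupp \<mu>) x * Plim z x) \<in> borel_measurable (completion \<mu>)"
        by (rule Z.Pl_ind_meas)
      have [measurable]: "g \<in> borel_measurable (completion \<mu>)" by (rule gmc)
      have [measurable]: "msupp \<mu> \<in> sets (completion \<mu>)" by (rule s0c)
      show ?thesis unfolding d0_def by measurable
    qed
    have d0bd: "AE x in completion \<mu>. \<bar>d0 x\<bar> \<le> 3*\<eta> + (2*C+4) * indicator B0 x"
    proof (rule AE_I'[OF Z.Pl_bdd])
      show "{x \<in> space (completion \<mu>). \<not> \<bar>d0 x\<bar> \<le> 3*\<eta> + (2*C+4) * indicator B0 x}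
          \<subseteq> {x \<in> msupp \<mu>. \<not> \<bar>Plim z x\<bar> \<le> C + 1}"
      proof (safe)
        fix x assume nx: "\<not> \<bar>d0 x\<bar> \<le> 3*\<eta> + (2*C+4) * indicator B0 x"
        show xs: "x \<in> msupp \<mu>"
        proof (rule ccontr)
          assume "x \<notin> msupp \<mu>"
          then show False using nx \<eta> C by (simp add: d0_def)
        qed
        show "\<bar>Plim z x\<bar> \<le> C + 1 \<Longrightarrow> False"
        proof -
          assume pb: "\<bar>Plim z x\<bar> \<le> C + 1"
          have dx: "d0 x = Plim z x - g x" using xs by (simp add: d0_def)
          show False
          proof (cases "x \<in> B0")
            case True
            have "\<bar>Plim z x - g x\<bar> \<le> 2*C+4" using pb g(3)[rule_format, of x] by linarith
            then show False using nx True dx \<eta> by simp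
          next
            case False
            then have "\<bar>Plim z x - g x\<bar> \<le> 3*\<eta>" using xs by (auto simp: B0_def)
            then show False using nx False dx by simp
          qed
        qed
      qed
    qed
    have \<eta>0: "3*\<eta> \<ge> 0" "2*C+4 \<ge> 0" using \<eta> C by auto
    note E0 = est_lim[OF f0i d0m B0s \<eta>0 d0bd]
    have "(\<integral>x. indicator B0 x * \<bar>f0 x\<bar> \<partial>completion \<mu>) \<le> \<epsilon> / (8 * (2*C+4))"
      using \<delta>0(2) B0s g(5) \<tau>(2) unfolding B0_def by auto
    then have "(2*C+4) * (\<integral>x. indicator B0 x * \<bar>f0 x\<bar> \<partial>completion \<mu>) \<le> (2*C+4) * (\<epsilon> / (8 * (2*C+4)))"
      using C by (intro mult_left_mono) auto
    also have "\<dots> = \<epsilon> / 8" using C by (intro scale_helper2) auto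
    finally have lim_err: "\<bar>\<integral>x. d0 x * f0 x \<partial>completion \<mu>\<bar> \<le> 3*\<eta> * F0 + \<epsilon> / 8"
      using E0(2) unfolding F0_def by linarith
    define Zl where "Zl = (\<integral>x. indicator (msupp \<mu>) x * g x * \<phi>s x \<partial>(completion \<mu>))"
    have h0i: "integrable (completion \<mu>) (\<lambda>x. indicator (msupp \<mu>) x * g x * \<phi>s x)"
    proof (rule Bochner_Integration.integrable_bound[OF integrable_mult_right[OF integrable_abs[OF f0i]]])
      show "(\<lambda>x. indicator (msupp \<mu>) x * g x * \<phi>s x) \<in> borel_measurable (completion \<mu>)"
      proof -
        have "(\<lambda>x. g x * f0 x) \<in> borel_measurable (completion \<mu>)" using gmc f0m by auto
        moreover have "(\<lambda>x. g x * f0 x) = (\<lambda>x. indicator (msupp \<mu>) x * g x * \<phi>s x)"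
          by (auto simp: f0_def)
        ultimately show ?thesis by simp
      qed
      have "\<bar>indicator (msupp \<mu>) x * g x * \<phi>s x\<bar> \<le> \<bar>(C + 3) * \<bar>f0 x\<bar>\<bar>" for x
      proof -
        have "\<bar>indicator (msupp \<mu>) x * g x * \<phi>s x\<bar> = \<bar>g x\<bar> * \<bar>f0 x\<bar>"
          by (simp add: f0_def abs_mult)
        also have "\<dots> \<le> (C + 3) * \<bar>f0 x\<bar>" using g(3) by (intro mult_right_mono) auto
        finally show ?thesis by simp
      qed
      then show "AE x in completion \<mu>. norm (indicator (msupp \<mu>) x * g x * \<phi>s x) \<le> norm ((C + 3) * \<bar>f0 x\<bar>)"
        by simp
    qed
    have W_eq: "W = (\<integral>x. d0 x * f0 x \<partial>completion \<mu>) + Zl"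
    proof -
      have "W = (\<integral>x. d0 x * f0 x + indicator (msupp \<mu>) x * g x * \<phi>s x \<partial>completion \<mu>)"
        unfolding W_def by (intro Bochner_Integration.integral_cong) (auto simp: d0_def f0_def indicator_def algebra_simps)
      also have "\<dots> = (\<integral>x. d0 x * f0 x \<partial>completion \<mu>) + Zl"
        unfolding Zl_def using E0(1) h0i by (rule Bochner_Integration.integral_add)
      finally show ?thesis .
    qed
    define E1 where "E1 = 2*\<eta>*(M1 + Q) + \<epsilon> / 4"
    have evX: "\<forall>\<^sub>F j in sequentially. \<phi> m z \<le> (\<integral>x. indicator (msupp (\<mu>s j)) x * g x * \<phi> j x \<partial>(\<mu>s j)) + E1"
      using evL evM g(4) eventually_ge_at_top[of "m + 1"]
    proof eventually_elim
      case (elim j)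
      have jm: "j > m" "j \<ge> 1" using elim(4) m by auto
      interpret J: finite_measure "\<mu>s j" using meas_fin jm(2) .
      define fj where "fj x = indicator (msupp (\<mu>s j)) x * \<phi> j x" for x
      define dj where "dj x = indicator (msupp (\<mu>s j)) x * P j z x - indicator (msupp (\<mu>s j)) x * g x" for x
      define Bj where "Bj = {x \<in> msupp (\<mu>s j). \<bar>P j z x - g x\<bar> > 2*\<eta>}"
      have sj: "msupp (\<mu>s j) \<in> sets borel" using S.supp_j(2)[OF jm(2)] .
      have fjb: "fj \<in> borel_measurable borel" unfolding fj_def by (rule \<phi>m[OF jm(2)])
      have fjm: "fj \<in> borel_measurable (\<mu>s j)" using S.bm_j[OF jm(2) fjb] .
      have djb: "dj \<in> borel_measurable borel"
      proof -
        have [measurable]: "(\<lambda>x. indicator (msupp (\<mu>s j)) x * P j z x) \<in> borel_measurable borel"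
          using Z.Pz_ind_meas[OF jm(1)] .
        have [measurable]: "g \<in> borel_measurable borel" by (rule g(2))
        have [measurable]: "msupp (\<mu>s j) \<in> sets borel" by (rule sj)
        show ?thesis unfolding dj_def by measurable
      qed
      have djm: "dj \<in> borel_measurable (\<mu>s j)" using S.bm_j[OF jm(2) djb] .
      have Bjb: "Bj \<in> sets borel"
      proof -
        have [measurable]: "(\<lambda>x. indicator (msupp (\<mu>s j)) x * P j z x) \<in> borel_measurable borel"
          using Z.Pz_ind_meas[OF jm(1)] .
        have [measurable]: "g \<in> borel_measurable borel" by (rule g(2))
        have [measurable]: "msupp (\<mu>s j) \<in> sets borel" by (rule sj)
        have "Bj = {x \<in> space borel. \<bar>indicator (msupp (\<mu>s j)) x * P j z x - g x\<bar> > 2*\<eta>} \<inter> msupp (\<mu>s j)"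
          by (auto simp: Bj_def)
        also have "\<dots> \<in> sets borel" by measurable
        finally show ?thesis .
      qed
      have Bjs: "Bj \<in> sets (\<mu>s j)" using Bjb S.meas_sets[OF jm(2)] by simp
      have dbd: "\<bar>dj x\<bar> \<le> 2*\<eta> + (2*C+3) * indicator Bj x" for x
      proof (cases "x \<in> msupp (\<mu>s j)")
        case False
        then show ?thesis using \<eta> C by (simp add: dj_def)
      next
        case True
        have dx: "dj x = P j z x - g x" using True by (simp add: dj_def)
        show ?thesis
        proof (cases "x \<in> Bj")
          case xB: True
          have "\<bar>P j z x - g x\<bar> \<le> 2*C+3" using Pbd[OF jm(1) True] g(3)[rule_format, of x] by linarith
          then show ?thesis using xB dx \<eta> by simp
        next
          case False
          then show ?thesis using True dx by (auto simp: Bj_def)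
        qed
      qed
      have \<alpha>\<beta>: "2*\<eta> \<ge> 0" "2*C+3 \<ge> 0" using \<eta> C by auto
      have lpj: "lp_norm p (\<mu>s j) (msupp (\<mu>s j)) (\<phi> j) < ereal L" by (rule elim(1))
      note LB = lp_bound[OF lpj p S.bm_j[OF jm(2) \<phi>m[OF jm(2)]]]
      have ip: "integrable (\<mu>s j) (\<lambda>x. \<bar>fj x\<bar> powr p)" using LB(1) by (simp add: fj_def)
      have iQ: "(\<integral>x. \<bar>fj x\<bar> powr p \<partial>\<mu>s j) \<le> Q" using LB(2) by (simp add: fj_def Q_def)
      note EJ = est_j[OF J.finite_measure_axioms fjm djm Bjs \<alpha>\<beta> dbd ip iQ t p]
      have "\<bar>\<integral>x. dj x * fj x \<partial>\<mu>s j\<bar> \<le> 2*\<eta> * (measure (\<mu>s j) (space (\<mu>s j)) + Q) + (2*C+3) * (t * measure (\<mu>s j) Bj + t powr (1 - p) * Q)"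
        by (rule EJ(2))
      also have "\<dots> \<le> 2*\<eta> * (M1 + Q) + (2*C+3) * (t * \<tau> + t powr (1 - p) * Q)"
        using elim(2) elim(3) \<eta> C t by (intro add_mono mult_left_mono) (auto simp: Bj_def)
      also have "\<dots> = 2*\<eta> * (M1 + Q) + (2*C+3) * (t * \<tau>) + (2*C+3) * (t powr (1 - p) * Q)"
        by (simp add: algebra_simps)
      also have "\<dots> \<le> E1" using \<tau>b tQ by (simp add: E1_def)
      finally have errj: "\<bar>\<integral>x. dj x * fj x \<partial>\<mu>s j\<bar> \<le> E1" .
      have hji: "integrable (\<mu>s j) (\<lambda>x. indicator (msupp (\<mu>s j)) x * g x * \<phi> j x)"
      proof (rule Bochner_Integration.integrable_bound[OF integrable_mult_right[OF integrable_abs[OF EJ(3)]]])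
        show "(\<lambda>x. indicator (msupp (\<mu>s j)) x * g x * \<phi> j x) \<in> borel_measurable (\<mu>s j)"
        proof -
          have "(\<lambda>x. g x * fj x) \<in> borel_measurable (\<mu>s j)" using S.bm_j[OF jm(2) g(2)] fjm by auto
          moreover have "(\<lambda>x. g x * fj x) = (\<lambda>x. indicator (msupp (\<mu>s j)) x * g x * \<phi> j x)"
            by (auto simp: fj_def)
          ultimately show ?thesis by simp
        qed
        have "\<bar>indicator (msupp (\<mu>s j)) x * g x * \<phi> j x\<bar> \<le> \<bar>(C + 3) * \<bar>fj x\<bar>\<bar>" for x
        proof -
          have "\<bar>indicator (msupp (\<mu>s j)) x * g x * \<phi> j x\<bar> = \<bar>g x\<bar> * \<bar>fj x\<bar>"
            by (simp add: fj_def abs_mult)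
          also have "\<dots> \<le> (C + 3) * \<bar>fj x\<bar>" using g(3) by (intro mult_right_mono) auto
          finally show ?thesis by simp
        qed
        then show "AE x in \<mu>s j. norm (indicator (msupp (\<mu>s j)) x * g x * \<phi> j x) \<le> norm ((C + 3) * \<bar>fj x\<bar>)"
          by simp
      qed
      have "(\<integral>\<zeta>. indicator (msupp (\<mu>s j)) \<zeta> * P j z \<zeta> * \<phi> j \<zeta> \<partial>(\<mu>s j))
          = (\<integral>x. dj x * fj x + indicator (msupp (\<mu>s j)) x * g x * \<phi> j x \<partial>\<mu>s j)"
        by (intro Bochner_Integration.integral_cong) (auto simp: dj_def fj_def indicator_def algebra_simps)
      also have "\<dots> = (\<integral>x. dj x * fj x \<partial>\<mu>s j) + (\<integral>x. indicator (msupp (\<mu>s j)) x * g x * \<phi> j x \<partial>\<mu>s j)"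
        using EJ(1) hji by (rule Bochner_Integration.integral_add)
      finally have Xeq: "(\<integral>\<zeta>. indicator (msupp (\<mu>s j)) \<zeta> * P j z \<zeta> * \<phi> j \<zeta> \<partial>(\<mu>s j))
          = (\<integral>x. dj x * fj x \<partial>\<mu>s j) + (\<integral>x. indicator (msupp (\<mu>s j)) x * g x * \<phi> j x \<partial>\<mu>s j)" .
      have "\<phi> m z \<le> (\<integral>\<zeta>. indicator (msupp (\<mu>s j)) \<zeta> * P j z \<zeta> * \<phi> j \<zeta> \<partial>(\<mu>s j))"
        by (rule sub[OF m jm(1) z])
      then show ?case using Xeq errj by linarith
    qed
    have Ylim: "(\<lambda>j. \<integral>x. indicator (msupp (\<mu>s j)) x * g x * \<phi> j x \<partial>(\<mu>s j)) \<longlonglongrightarrow> Zl"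
      unfolding Zl_def by (rule wk[OF g(1)])
    have "\<phi> m z - E1 \<le> Zl"
    proof (rule tendsto_lowerbound[OF Ylim])
      show "\<forall>\<^sub>F j in sequentially. \<phi> m z - E1 \<le> (\<integral>x. indicator (msupp (\<mu>s j)) x * g x * \<phi> j x \<partial>(\<mu>s j))"
        using evX by eventually_elim linarith
    qed simp
    then have "\<phi> m z \<le> W + 3*\<eta>*F0 + \<epsilon> / 8 + E1" using W_eq lim_err by linarith
    also have "\<dots> \<le> W + \<epsilon>"
    proof -
      have "3*\<eta>*F0 + 2*\<eta>*(M1 + Q) \<le> 3 * (\<eta> * (M1 + Q + F0 + 1))"
        using \<eta> M1 Q0 F0 by (simp add: algebra_simps)
      also have "\<dots> \<le> 3 * (\<epsilon> / 8)" using \<eta>b by simp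
      finally show ?thesis using \<epsilon> by (simp add: E1_def)
    qed
    finally show "\<phi> m z \<le> W + \<epsilon>" .
  qed
  then show ?thesis by (simp add: W_def)
qed


end
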